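(* Let $\Lambda$ be a positive random variable, let $N(t)$, $t\ge0$, be a standard Poisson process (unit intensity) independent of $\Lambda$, let $(m_n)$ be positive numbers with $m_n\to\infty$, and set $N_n=N(m_n\Lambda)$. Let $X_1,X_2,\ldots$ be i.i.d. random variables with $a=\mathsf{E}X_1\neq0$ and finite variance $\sigma^2=\mathsf{D}X_1$, with each $N_n$ independent of $X_1,X_2,\ldots$ (empty sums are $0$). Let $1\le s\le2$ and write $s=m+\alpha$ with $m$ a nonnegative integer and $0<\alpha\le1$. Then for every $n$ $$ \zeta_s\bigg(\frac{1}{am_n}\sum_{j=1}^{N(m_n\Lambda)}X_j,\;\Lambda\bigg)\le\frac{\mathsf{E}\Lambda^{s/2}}{m_n^{s/2}}\cdot\frac{\Gamma(1+\alpha)}{\Gamma(1+s)}\Big(1+\frac{\sigma^2}{a^2}\Big)^{s/2}. $$ In particular, $$ \zeta_2\bigg(\frac{1}{am_n}\sum_{j=1}^{N(m_n\Lambda)}X_j,\;\Lambda\bigg)\le\frac{\mathsf{E}\Lambda}{2m_n}\Big(1+\frac{\sigma^2}{a^2}\Big). $$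
   Context: For $s>0$ write uniquely $s=m+\alpha$ with $m$ a nonnegative integer and $0<\alpha\le 1$. $\mathcal{F}_s$ denotes the set of all real-valued bounded functions $f$ on $\mathbb{R}$ that are $m$ times differentiable and satisfy $|f^{(m)}(x)-f^{(m)}(y)|\le|x-y|^{\alpha}$ for all $x,y$. The Zolotarev metric is $\zeta_s(X,Y)=\sup\{|\mathsf{E}(f(X)-f(Y))|: f\in\mathcal{F}_s\}$. *)

theory Defs
  imports "HOL-Probability.Probability"
begin

text \<open>Decomposition s = m + alpha with m a nonnegative integer and 0 < alpha \<le> 1 (for s > 0).\<close>
definition zol_m :: "real \<Rightarrow> nat" where
  "zol_m s = nat (\<lceil>s\<rceil> - 1)"

definition zol_alpha :: "real \<Rightarrow> real" where
  "zol_alpha s = s - real (zol_m s)"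

definition zol_class :: "real \<Rightarrow> (real \<Rightarrow> real) set" where
  "zol_class s = {f. bounded (range f)
      \<and> (\<forall>k < zol_m s. \<forall>x. ((deriv ^^ k) f) differentiable (at x))
      \<and> (\<forall>x y. \<bar>(deriv ^^ zol_m s) f x - (deriv ^^ zol_m s) f y\<bar> \<le> \<bar>x - y\<bar> powr zol_alpha s)}"

definition zolotarev :: "'a measure \<Rightarrow> real \<Rightarrow> ('a \<Rightarrow> real) \<Rightarrow> ('a \<Rightarrow> real) \<Rightarrow> ennreal" where
  "zolotarev M s X Y =
     (SUP f \<in> zol_class s. ennreal \<bar>(\<integral>\<omega>. f (X \<omega>) \<partial>M) - (\<integral>\<omega>. f (Y \<omega>) \<partial>M)\<bar>)"

definition std_poisson_process :: "'a measure \<Rightarrow> (real \<Rightarrow> 'a \<Rightarrow> nat) \<Rightarrow> bool" where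
  "std_poisson_process M N \<longleftrightarrow>
     (\<forall>t. N t \<in> measurable M (count_space UNIV))
   \<and> (\<forall>\<omega>\<in>space M. N 0 \<omega> = 0)
   \<and> (\<forall>\<omega>\<in>space M. mono_on {0..} (\<lambda>t. N t \<omega>))
   \<and> (\<forall>\<omega>\<in>space M. \<forall>t\<ge>0. continuous (at_right t) (\<lambda>u. real (N u \<omega>)))
   \<and> (\<forall>(t::nat \<Rightarrow> real) k. 0 \<le> t 0 \<longrightarrow> strict_mono_on {..k} t \<longrightarrow>
        prob_space.indep_vars M (\<lambda>_. count_space UNIV)
          (\<lambda>i \<omega>. N (t (Suc i)) \<omega> - N (t i) \<omega>) {..<k})
   \<and> (\<forall>u t (j::nat). 0 \<le> u \<longrightarrow> u \<le> t \<longrightarrow>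
        measure M {\<omega> \<in> space M. N t \<omega> - N u \<omega> = j} = exp (-(t - u)) * (t - u) ^ j / fact j)"

text \<open>Independence of two random elements with possibly different codomain types:
  their generated sigma-algebras are independent (and both are measurable).\<close>
definition indep_rv :: "'a measure \<Rightarrow> 'b measure \<Rightarrow> ('a \<Rightarrow> 'b) \<Rightarrow> 'c measure \<Rightarrow> ('a \<Rightarrow> 'c) \<Rightarrow> bool" where
  "indep_rv M M1 X1 M2 X2 \<longleftrightarrow>
     X1 \<in> measurable M M1 \<and> X2 \<in> measurable M M2 \<and>
     prob_space.indep_set M {X1 -` A \<inter> space M | A. A \<in> sets M1}
                            {X2 -` B \<inter> space M | B. B \<in> sets M2}"

end

theory Submission
  imports Defs
begin

lemma holder_taylor_right:
  fixes f D :: "real \<Rightarrow> real" and \<alpha> x y :: real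
  assumes a: "0 < \<alpha>" and d: "\<And>z. (f has_real_derivative D z) (at z)"
    and h: "\<And>z w. \<bar>D z - D w\<bar> \<le> \<bar>z - w\<bar> powr \<alpha>"
    and yx: "y < x"
  shows "\<bar>f x - f y - D y * (x - y)\<bar> \<le> (x - y) powr (1+\<alpha>) / (1+\<alpha>)"
proof -
  define g where "g z = f z - f y - D y * (z - y)" for z
  define \<psi> where "\<psi> z = (z - y) powr (1+\<alpha>) / (1+\<alpha>)" for z
  have dg: "(g has_real_derivative (D z - D y)) (at z)" for z
    unfolding g_def by (auto intro!: derivative_eq_intros d)
  have dpsi: "(\<psi> has_real_derivative (z - y) powr \<alpha>) (at z)" if "y < z" for z
  proof -
    have "((\<lambda>z. (z - y) powr (1+\<alpha>)) has_real_derivative (1+\<alpha>) * (z - y) powr \<alpha> * 1) (at z)"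
    proof -
      have h1: "((\<lambda>w. w powr (1+\<alpha>)) has_real_derivative (1+\<alpha>) * (z - y) powr \<alpha>) (at (z - y))"
        using has_real_derivative_powr[of "z - y" "1+\<alpha>"] that by simp
      have h2: "((\<lambda>z. z - y) has_real_derivative 1) (at z)" by (auto intro!: derivative_eq_intros)
      from DERIV_chain2[OF h1 h2] show ?thesis by (simp add: o_def)
    qed
    then show ?thesis unfolding \<psi>_def using a that
      by (auto intro!: derivative_eq_intros)
  qed
  have cg: "continuous_on {y..x} g"
    using dg by (meson DERIV_isCont continuous_at_imp_continuous_on)
  have cpsi: "continuous_on {y..x} \<psi>"
    unfolding \<psi>_def using a by (auto intro!: continuous_intros continuous_on_powr')
  have hz: "\<bar>D z - D y\<bar> \<le> (z - y) powr \<alpha>" if "y < z" for z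
    using h[of z y] that by simp
  have 1: "(\<lambda>z. \<psi> z - g z) y \<le> (\<lambda>z. \<psi> z - g z) x"
  proof (rule DERIV_nonneg_imp_increasing_open[OF less_imp_le[OF yx]])
    fix z assume "y < z" "z < x"
    then show "\<exists>e. ((\<lambda>z. \<psi> z - g z) has_real_derivative e) (at z) \<and> 0 \<le> e"
      using dpsi[of z] dg[of z] hz[of z]
      by (intro exI[of _ "(z - y) powr \<alpha> - (D z - D y)"]) (auto intro!: derivative_eq_intros)
  next
    show "continuous_on {y..x} (\<lambda>z. \<psi> z - g z)" using cg cpsi by (simp add: continuous_intros)
  qed
  have 2: "(\<lambda>z. \<psi> z + g z) y \<le> (\<lambda>z. \<psi> z + g z) x"
  proof (rule DERIV_nonneg_imp_increasing_open[OF less_imp_le[OF yx]])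
    fix z assume "y < z" "z < x"
    then show "\<exists>e. ((\<lambda>z. \<psi> z + g z) has_real_derivative e) (at z) \<and> 0 \<le> e"
      using dpsi[of z] dg[of z] hz[of z]
      by (intro exI[of _ "(z - y) powr \<alpha> + (D z - D y)"]) (auto intro!: derivative_eq_intros)
  next
    show "continuous_on {y..x} (\<lambda>z. \<psi> z + g z)" using cg cpsi by (simp add: continuous_intros)
  qed
  have "g y = 0" "\<psi> y = 0" unfolding g_def \<psi>_def by auto
  with 1 2 show ?thesis unfolding g_def[symmetric] \<psi>_def[symmetric] by auto
qed

lemma holder_taylor_left:
  fixes f D :: "real \<Rightarrow> real" and \<alpha> x y :: real
  assumes a: "0 < \<alpha>" and d: "\<And>z. (f has_real_derivative D z) (at z)"
    and h: "\<And>z w. \<bar>D z - D w\<bar> \<le> \<bar>z - w\<bar> powr \<alpha>"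
    and yx: "x < y"
  shows "\<bar>f x - f y - D y * (x - y)\<bar> \<le> (y - x) powr (1+\<alpha>) / (1+\<alpha>)"
proof -
  define g where "g z = f z - f y - D y * (z - y)" for z
  define \<psi> where "\<psi> z = (y - z) powr (1+\<alpha>) / (1+\<alpha>)" for z
  have dg: "(g has_real_derivative (D z - D y)) (at z)" for z
    unfolding g_def by (auto intro!: derivative_eq_intros d)
  have dpsi: "(\<psi> has_real_derivative - ((y - z) powr \<alpha>)) (at z)" if "z < y" for z
  proof -
    have "((\<lambda>z. (y - z) powr (1+\<alpha>)) has_real_derivative (1+\<alpha>) * (y - z) powr \<alpha> * (-1)) (at z)"
    proof -
      have h1: "((\<lambda>w. w powr (1+\<alpha>)) has_real_derivative (1+\<alpha>) * (y - z) powr \<alpha>) (at (y - z))"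
        using has_real_derivative_powr[of "y - z" "1+\<alpha>"] that by simp
      have h2: "((\<lambda>z. y - z) has_real_derivative - 1) (at z)" by (auto intro!: derivative_eq_intros)
      from DERIV_chain2[OF h1 h2] show ?thesis by (simp add: o_def)
    qed
    then show ?thesis unfolding \<psi>_def using a that
      by (auto intro!: derivative_eq_intros)
  qed
  have cg: "continuous_on {x..y} g"
    using dg by (meson DERIV_isCont continuous_at_imp_continuous_on)
  have cpsi: "continuous_on {x..y} \<psi>"
    unfolding \<psi>_def using a by (auto intro!: continuous_intros continuous_on_powr')
  have hz: "\<bar>D z - D y\<bar> \<le> (y - z) powr \<alpha>" if "z < y" for z
    using h[of z y] that by simp
  have 1: "(\<lambda>z. \<psi> z - g z) y \<le> (\<lambda>z. \<psi> z - g z) x"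
  proof (rule DERIV_nonpos_imp_decreasing_open[OF less_imp_le[OF yx]])
    fix z assume "x < z" "z < y"
    then show "\<exists>e. ((\<lambda>z. \<psi> z - g z) has_real_derivative e) (at z) \<and> e \<le> 0"
      using dpsi[of z] dg[of z] hz[of z]
      by (intro exI[of _ "- ((y - z) powr \<alpha>) - (D z - D y)"]) (auto intro!: derivative_eq_intros)
  next
    show "continuous_on {x..y} (\<lambda>z. \<psi> z - g z)" using cg cpsi by (simp add: continuous_intros)
  qed
  have 2: "(\<lambda>z. \<psi> z + g z) y \<le> (\<lambda>z. \<psi> z + g z) x"
  proof (rule DERIV_nonpos_imp_decreasing_open[OF less_imp_le[OF yx]])
    fix z assume "x < z" "z < y"
    then show "\<exists>e. ((\<lambda>z. \<psi> z + g z) has_real_derivative e) (at z) \<and> e \<le> 0"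
      using dpsi[of z] dg[of z] hz[of z]
      by (intro exI[of _ "- ((y - z) powr \<alpha>) + (D z - D y)"]) (auto intro!: derivative_eq_intros)
  next
    show "continuous_on {x..y} (\<lambda>z. \<psi> z + g z)" using cg cpsi by (simp add: continuous_intros)
  qed
  have "g y = 0" "\<psi> y = 0" unfolding g_def \<psi>_def by auto
  with 1 2 show ?thesis unfolding g_def[symmetric] \<psi>_def[symmetric] by auto
qed

lemma holder_taylor:
  fixes f D :: "real \<Rightarrow> real" and \<alpha> x y :: real
  assumes a: "0 < \<alpha>" and d: "\<And>z. (f has_real_derivative D z) (at z)"
    and h: "\<And>z w. \<bar>D z - D w\<bar> \<le> \<bar>z - w\<bar> powr \<alpha>"
  shows "\<bar>f x - f y - D y * (x - y)\<bar> \<le> \<bar>x - y\<bar> powr (1+\<alpha>) / (1+\<alpha>)"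
proof -
  consider "y < x" | "x < y" | "x = y" by linarith
  then show ?thesis
  proof cases
    case 1 then show ?thesis using holder_taylor_right[OF a d h 1] by simp
  next
    case 2 then show ?thesis using holder_taylor_left[OF a d h 2] by simp
  qed simp
qed


lemma zol_m_1: "zol_m 1 = 0" by (simp add: zol_m_def)
lemma zol_m_gt: "1 < s \<Longrightarrow> s \<le> 2 \<Longrightarrow> zol_m s = 1"
proof -
  assume "1 < s" "s \<le> 2"
  then have "\<lceil>s\<rceil> = 2" by (simp add: ceiling_eq_iff)
  then show ?thesis by (simp add: zol_m_def)
qed

lemma zol_taylor:
  assumes s: "1 \<le> s" "s \<le> 2" and f: "f \<in> zol_class s"
  shows "\<exists>D. \<forall>x y. \<bar>f x - f y - D y * (x - y)\<bar>
           \<le> Gamma (1 + zol_alpha s) / Gamma (1 + s) * \<bar>x - y\<bar> powr s"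
proof (cases "s = 1")
  case True
  then have "zol_m s = 0" "zol_alpha s = 1" by (auto simp: zol_m_1 zol_alpha_def)
  with f have "\<bar>f x - f y\<bar> \<le> \<bar>x - y\<bar> powr 1" for x y
    unfolding zol_class_def by auto
  then show ?thesis using True
    by (intro exI[of _ "\<lambda>_. 0"]) (simp add: zol_alpha_def zol_m_1 Gamma_numeral)
next
  case False
  with s have s1: "1 < s" by simp
  have m: "zol_m s = 1" using zol_m_gt[OF s1 s(2)] .
  define \<alpha> where "\<alpha> = s - 1"
  have al: "zol_alpha s = \<alpha>" by (simp add: zol_alpha_def m \<alpha>_def)
  have a0: "0 < \<alpha>" using s1 by (simp add: \<alpha>_def)
  have diff: "f differentiable (at x)" for x
    using f unfolding zol_class_def m by auto
  have d: "(f has_real_derivative deriv f z) (at z)" for z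
    using diff DERIV_deriv_iff_real_differentiable by blast
  have h: "\<bar>deriv f z - deriv f w\<bar> \<le> \<bar>z - w\<bar> powr \<alpha>" for z w
    using f unfolding zol_class_def m al by auto
  have G: "Gamma (1 + \<alpha>) / Gamma (1 + s) = 1 / (1 + \<alpha>)"
  proof -
    have "1 + s = (1 + \<alpha>) + 1" by (simp add: \<alpha>_def)
    moreover have "(1 + \<alpha>) \<notin> \<int>\<^sub>\<le>\<^sub>0" using a0
      by (metis add_pos_pos less_numeral_extra(1) nonpos_Ints_nonpos not_le)
    ultimately have eq: "Gamma (1 + s) = (1 + \<alpha>) * Gamma (1 + \<alpha>)" using Gamma_plus1[of "1 + \<alpha>"] by simp
    have pos: "Gamma (1 + \<alpha>) > 0" using a0 by simp
    show ?thesis unfolding eq using pos a0 by (simp add: less_imp_neq[symmetric] del: Gamma_eq_zero_iff)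
  qed
  show ?thesis
  proof (intro exI allI)
    fix x y
    have "\<bar>f x - f y - deriv f y * (x - y)\<bar> \<le> \<bar>x - y\<bar> powr (1+\<alpha>) / (1+\<alpha>)"
      by (rule holder_taylor[OF a0 d h])
    then show "\<bar>f x - f y - deriv f y * (x - y)\<bar> \<le> Gamma (1 + zol_alpha s) / Gamma (1 + s) * \<bar>x - y\<bar> powr s"
      unfolding al G by (simp add: \<alpha>_def)
  qed
qed

lemma zol_bounded:
  assumes "f \<in> zol_class s" shows "\<exists>B. \<forall>x. \<bar>f x\<bar> \<le> B"
proof -
  from assms have "bounded (range f)" unfolding zol_class_def by auto
  then obtain B where "\<forall>y\<in>range f. norm y \<le> B" by (auto simp: bounded_iff)
  then show ?thesis by auto
qed

lemma zol_cont:
  assumes s: "1 \<le> s" "s \<le> 2" and f: "f \<in> zol_class s" shows "continuous_on UNIV f"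
proof (cases "s = 1")
  case True
  then have "zol_m s = 0" "zol_alpha s = 1" by (auto simp: zol_m_1 zol_alpha_def)
  with f have L: "\<bar>f x - f y\<bar> \<le> \<bar>x - y\<bar>" for x y
    unfolding zol_class_def by auto
  show ?thesis
    unfolding continuous_on_iff
  proof (intro ballI allI impI)
    fix x and e :: real assume "0 < e"
    then show "\<exists>d>0. \<forall>x'\<in>UNIV. dist x' x < d \<longrightarrow> dist (f x') (f x) < e"
      using L by (intro exI[of _ e]) (auto simp: dist_real_def intro: le_less_trans)
  qed
next
  case False
  with s have s1: "1 < s" by simp
  have m: "zol_m s = 1" using zol_m_gt[OF s1 s(2)] .
  have diff: "f differentiable (at x)" for x
    using f unfolding zol_class_def m by auto
  then show ?thesis
    by (simp add: continuous_at_imp_continuous_on differentiable_imp_continuous_within)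
qed


lemma tangent_powr:
  fixes t A q :: real
  assumes q: "0 < q" "q \<le> 1" and A: "0 < A" and t: "0 \<le> t"
  shows "t powr q \<le> A powr q + q * A powr (q - 1) * (t - A)"
proof (cases "t = 0")
  case True
  have "A powr (q - 1) * A = A powr q"
    using A by (simp add: powr_diff)
  then have "A powr q + q * A powr (q - 1) * (t - A) = (1 - q) * A powr q"
    using True by (simp add: algebra_simps)
  then show ?thesis using True q A by simp
next
  case False
  then have t0: "t > 0" using t by simp
  have "t powr q * A powr (1 - q) \<le> q * t + (1 - q) * A"
    using Youngs_inequality_0[of q "1 - q" t A] q A t0 by simp
  then have "t powr q * A powr (1 - q) * A powr (q - 1) \<le> (q * t + (1 - q) * A) * A powr (q - 1)"
    by (rule mult_right_mono) simp
  moreover have "A powr (1 - q) * A powr (q - 1) = 1"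
    using A by (simp add: powr_add[symmetric])
  ultimately have "t powr q \<le> (q * t + (1 - q) * A) * A powr (q - 1)"
    by (simp add: mult.assoc)
  also have "\<dots> = q * A powr (q - 1) * t + (1 - q) * (A powr (q - 1) * A)"
    by (simp add: algebra_simps)
  also have pd: "A powr (q - 1) * A = A powr q"
    using A by (simp add: powr_diff)
  finally have "t powr q \<le> q * A powr (q - 1) * t + (1 - q) * A powr q" .
  moreover have "A powr q + q * A powr (q - 1) * (t - A) = q * A powr (q - 1) * t + (1 - q) * A powr q"
    by (simp add: algebra_simps pd[symmetric])
  ultimately show ?thesis by simp
qed

definition pois :: "real \<Rightarrow> nat \<Rightarrow> real" where
  "pois \<mu> k = exp (- \<mu>) * \<mu> ^ k / fact k"

lemma pois_nonneg: "0 \<le> \<mu> \<Longrightarrow> 0 \<le> pois \<mu> k"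
  by (simp add: pois_def)

lemma pois_sums0: "(\<lambda>k. pois \<mu> k) sums 1"
proof -
  have "(\<lambda>k. exp (- \<mu>) * (\<mu> ^ k /\<^sub>R fact k)) sums (exp (- \<mu>) * exp \<mu>)"
    by (rule sums_mult[OF exp_converges])
  moreover have "exp (- \<mu>) * (\<mu> ^ k /\<^sub>R fact k) = pois \<mu> k" for k
    by (simp add: pois_def real_scaleR_def divide_inverse mult.assoc mult.left_commute)
  moreover have "exp (- \<mu>) * exp \<mu> = 1" by (simp add: exp_add[symmetric])
  ultimately show ?thesis by simp
qed

lemma pois_Suc: "pois \<mu> (Suc k) = \<mu> * pois \<mu> k / real (Suc k)"
  by (simp add: pois_def field_simps)

lemma pois_sums1: "(\<lambda>k. real k * pois \<mu> k) sums \<mu>"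
proof -
  have "(\<lambda>k. \<mu> * pois \<mu> k) sums (\<mu> * 1)" by (rule sums_mult[OF pois_sums0])
  moreover have "real (Suc k) * pois \<mu> (Suc k) = \<mu> * pois \<mu> k" for k
    by (simp add: pois_Suc)
  ultimately have "(\<lambda>k. real (Suc k) * pois \<mu> (Suc k)) sums \<mu>" by simp
  from sums_Suc[OF this] show ?thesis by simp
qed

lemma pois_sums2: "(\<lambda>k. (real k)\<^sup>2 * pois \<mu> k) sums (\<mu>\<^sup>2 + \<mu>)"
proof -
  have "(\<lambda>k. \<mu> * (real k * pois \<mu> k) + \<mu> * pois \<mu> k) sums (\<mu> * \<mu> + \<mu> * 1)"
    by (intro sums_add sums_mult pois_sums1 pois_sums0)
  moreover have "(real (Suc k))\<^sup>2 * pois \<mu> (Suc k) = \<mu> * (real k * pois \<mu> k) + \<mu> * pois \<mu> k" for k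
    by (simp add: pois_Suc power2_eq_square field_simps)
  ultimately have "(\<lambda>k. (real (Suc k))\<^sup>2 * pois \<mu> (Suc k)) sums (\<mu>\<^sup>2 + \<mu>)"
    by (simp add: power2_eq_square)
  from sums_Suc[OF this] show ?thesis by simp
qed

lemma pois_le1: "0 \<le> \<mu> \<Longrightarrow> pois \<mu> k \<le> 1"
proof -
  assume "0 \<le> \<mu>"
  then have "sum (pois \<mu>) {k} \<le> suminf (pois \<mu>)"
    using pois_sums0 by (intro sum_le_suminf) (auto intro: pois_nonneg sums_summable)
  moreover have "suminf (pois \<mu>) = 1" using sums_unique[OF pois_sums0] by simp
  ultimately show ?thesis by simp
qed


lemma abs_powr_sq: "0 < s \<Longrightarrow> \<bar>d::real\<bar> powr s = (d\<^sup>2) powr (s / 2)"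
proof (cases "d = 0")
  case False
  assume s: "0 < s"
  have e: "d\<^sup>2 = \<bar>d\<bar> powr 2" using False by (simp add: powr_realpow)
  have "(d\<^sup>2) powr (s / 2) = (\<bar>d\<bar> powr 2) powr (s / 2)" by (simp only: e)
  also have "\<dots> = \<bar>d\<bar> powr s" by (simp only: powr_powr) simp
  finally show ?thesis by simp
qed simp

lemma per_lambda:
  fixes f D :: "real \<Rightarrow> real" and T :: "nat \<Rightarrow> 'a \<Rightarrow> real"
  assumes P: "prob_space M"
    and fB: "\<And>x. \<bar>f x\<bar> \<le> B"
    and fm: "f \<in> borel_measurable borel"
    and tay: "\<And>x y. \<bar>f x - f y - D y * (x - y)\<bar> \<le> G * \<bar>x - y\<bar> powr s"
    and G: "0 \<le> G" and s: "1 \<le> s" "s \<le> 2"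
    and Tm: "\<And>k. T k \<in> borel_measurable M"
    and Ti: "\<And>k. integrable M (T k)"
    and Ti2: "\<And>k. integrable M (\<lambda>\<omega>. (T k \<omega>)\<^sup>2)"
    and ET: "\<And>k. (\<integral>\<omega>. T k \<omega> \<partial>M) = real k / m"
    and VT: "\<And>k. (\<integral>\<omega>. (T k \<omega> - real k / m)\<^sup>2 \<partial>M) = real k * v / m\<^sup>2"
    and m: "0 < m" and v: "0 \<le> v" and lam: "0 < lam"
  shows "summable (\<lambda>k. pois (m * lam) k * (\<integral>\<omega>. f (T k \<omega>) \<partial>M))"
    and "\<bar>(\<Sum>k. pois (m * lam) k * (\<integral>\<omega>. f (T k \<omega>) \<partial>M)) - f lam\<bar>
           \<le> G * (lam * (1 + v) / m) powr (s / 2)"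
proof -
  interpret prob_space M by fact
  define p where "p k = pois (m * lam) k" for k
  define e where "e k = (\<integral>\<omega>. f (T k \<omega>) \<partial>M)" for k
  define A where "A = lam * (1 + v) / m"
  define q where "q = s / 2"
  have A: "0 < A" using lam v m by (simp add: A_def)
  have q: "0 < q" "q \<le> 1" using s by (auto simp: q_def)
  have p0: "0 \<le> p k" for k using lam m by (simp add: p_def pois_nonneg)
  have fTm: "(\<lambda>\<omega>. f (T k \<omega>)) \<in> borel_measurable M" for k
    by (rule measurable_compose[OF Tm fm])
  have fTi: "integrable M (\<lambda>\<omega>. f (T k \<omega>))" for k
    by (rule integrable_const_bound[where B=B]) (use fB fTm in auto)
  have eB: "\<bar>e k\<bar> \<le> B" for k
  proof -
    have "\<bar>e k\<bar> \<le> (\<integral>\<omega>. \<bar>f (T k \<omega>)\<bar> \<partial>M)" unfolding e_def by (rule integral_abs_bound)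
    also have "\<dots> \<le> (\<integral>\<omega>. B \<partial>M)" using fB fTi by (intro integral_mono) auto
    finally show ?thesis by (simp add: prob_space)
  qed
  have sp: "p sums 1" unfolding p_def by (rule pois_sums0)
  have sp1: "(\<lambda>k. real k * p k) sums (m * lam)" unfolding p_def by (rule pois_sums1)
  have sp2: "(\<lambda>k. (real k)\<^sup>2 * p k) sums ((m * lam)\<^sup>2 + m * lam)" unfolding p_def by (rule pois_sums2)
  have summ: "summable (\<lambda>k. p k * e k)"
  proof (rule summable_comparison_test'[where g="\<lambda>k. B * p k" and N=0])
    show "summable (\<lambda>k. B * p k)" using sp by (intro summable_mult sums_summable) auto
    fix k have "p k * \<bar>e k\<bar> \<le> p k * B" using p0[of k] eB[of k] by (intro mult_left_mono) auto
    then show "norm (p k * e k) \<le> B * p k" using p0[of k] by (simp add: abs_mult mult.commute)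
  qed
  then show "summable (\<lambda>k. pois (m * lam) k * (\<integral>\<omega>. f (T k \<omega>) \<partial>M))"
    by (simp add: p_def e_def)
  define L where "L = (\<Sum>k. p k * e k)"
  have sL: "(\<lambda>k. p k * e k) sums L" using summ by (simp add: L_def summable_sums)
  define w where "w k = real k * v / m\<^sup>2 + (real k / m - lam)\<^sup>2" for k
  have ET2: "(\<integral>\<omega>. (T k \<omega> - lam)\<^sup>2 \<partial>M) = w k" for k
  proof -
    have i1: "integrable M (\<lambda>\<omega>. (T k \<omega> - real k / m)\<^sup>2)"
      using Ti2[of k] Ti[of k] by (simp add: power2_diff)
    have "(\<lambda>\<omega>. (T k \<omega> - lam)\<^sup>2) = (\<lambda>\<omega>. (T k \<omega> - real k / m)\<^sup>2 + 2 * (real k / m - lam) * (T k \<omega> - real k / m) + (real k / m - lam)\<^sup>2)"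
      using m by (intro ext) (simp add: power2_eq_square field_simps)
    then have "(\<integral>\<omega>. (T k \<omega> - lam)\<^sup>2 \<partial>M) = (\<integral>\<omega>. (T k \<omega> - real k / m)\<^sup>2 \<partial>M) + 2 * (real k / m - lam) * ((\<integral>\<omega>. T k \<omega> \<partial>M) - real k / m) + (real k / m - lam)\<^sup>2"
      using i1 Ti[of k] by (simp add: prob_space)
    then show ?thesis using ET[of k] VT[of k] by (simp add: w_def)
  qed
  have sw: "(\<lambda>k. p k * w k) sums A"
  proof -
    have "(\<lambda>k. (v / m\<^sup>2 - 2 * lam / m) * (real k * p k) + (1 / m\<^sup>2) * ((real k)\<^sup>2 * p k) + lam\<^sup>2 * p k) sums
      ((v / m\<^sup>2 - 2 * lam / m) * (m * lam) + (1 / m\<^sup>2) * ((m * lam)\<^sup>2 + m * lam) + lam\<^sup>2 * 1)"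
      by (intro sums_add sums_mult sp sp1 sp2)
    moreover have "(v / m\<^sup>2 - 2 * lam / m) * (m * lam) + (1 / m\<^sup>2) * ((m * lam)\<^sup>2 + m * lam) + lam\<^sup>2 * 1 = A"
      using m by (simp add: A_def field_simps power2_eq_square)
    moreover have "(v / m\<^sup>2 - 2 * lam / m) * (real k * p k) + (1 / m\<^sup>2) * ((real k)\<^sup>2 * p k) + lam\<^sup>2 * p k = p k * w k" for k
      using m by (simp add: w_def field_simps power2_eq_square)
    ultimately show ?thesis by simp
  qed
  define b where "b k = G * (A powr q + q * A powr (q - 1) * (w k - A))" for k
  define r where "r k = e k - f lam - D lam * (real k / m - lam)" for k
  have rb: "\<bar>r k\<bar> \<le> b k" for k
  proof -
    let ?R = "\<lambda>\<omega>. f (T k \<omega>) - f lam - D lam * (T k \<omega> - lam)"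
    let ?U = "\<lambda>\<omega>. G * (A powr q + q * A powr (q - 1) * ((T k \<omega> - lam)\<^sup>2 - A))"
    have Ri: "integrable M ?R" using fTi[of k] Ti[of k] by auto
    have Ui: "integrable M ?U" using Ti2[of k] Ti[of k] by (simp add: power2_diff)
    have "(\<integral>\<omega>. ?R \<omega> \<partial>M) = r k"
      using fTi[of k] Ti[of k] ET[of k] by (simp add: r_def e_def prob_space)
    moreover have "\<bar>?R \<omega>\<bar> \<le> ?U \<omega>" for \<omega>
    proof -
      have "\<bar>?R \<omega>\<bar> \<le> G * \<bar>T k \<omega> - lam\<bar> powr s" by (rule tay)
      also have "\<bar>T k \<omega> - lam\<bar> powr s = ((T k \<omega> - lam)\<^sup>2) powr q"
        unfolding q_def using s by (intro abs_powr_sq) simp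
      also have "G * \<dots> \<le> ?U \<omega>"
        using tangent_powr[OF q A, of "(T k \<omega> - lam)\<^sup>2"] G by (intro mult_left_mono) auto
      finally show ?thesis .
    qed
    then have "\<bar>\<integral>\<omega>. ?R \<omega> \<partial>M\<bar> \<le> (\<integral>\<omega>. ?U \<omega> \<partial>M)"
    proof -
      assume h: "\<And>\<omega>. \<bar>?R \<omega>\<bar> \<le> ?U \<omega>"
      have "\<bar>\<integral>\<omega>. ?R \<omega> \<partial>M\<bar> \<le> (\<integral>\<omega>. \<bar>?R \<omega>\<bar> \<partial>M)" by (rule integral_abs_bound)
      also have "\<dots> \<le> (\<integral>\<omega>. ?U \<omega> \<partial>M)"
        by (rule integral_mono[OF integrable_abs[OF Ri] Ui h])
      finally show ?thesis .
    qed
    moreover have "(\<integral>\<omega>. ?U \<omega> \<partial>M) = b k"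
    proof -
      have "(\<integral>\<omega>. ?U \<omega> \<partial>M) = G * (A powr q + q * A powr (q - 1) * ((\<integral>\<omega>. (T k \<omega> - lam)\<^sup>2 \<partial>M) - A))"
        using Ti2[of k] Ti[of k] by (simp add: power2_diff prob_space)
      then show ?thesis using ET2[of k] by (simp add: b_def)
    qed
    ultimately show ?thesis by simp
  qed
  have sr: "(\<lambda>k. p k * r k) sums (L - f lam)"
  proof -
    have "(\<lambda>k. p k * e k - f lam * p k - (D lam / m) * (real k * p k) + (D lam * lam) * p k) sums
       (L - f lam * 1 - (D lam / m) * (m * lam) + (D lam * lam) * 1)"
      by (intro sums_add sums_diff sums_mult sL sp sp1)
    moreover have "L - f lam * 1 - (D lam / m) * (m * lam) + (D lam * lam) * 1 = L - f lam" using m by simp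
    moreover have "p k * e k - f lam * p k - (D lam / m) * (real k * p k) + (D lam * lam) * p k = p k * r k" for k
      using m by (simp add: r_def field_simps)
    ultimately show ?thesis by simp
  qed
  have sb: "(\<lambda>k. p k * b k) sums (G * A powr q)"
  proof -
    have "(\<lambda>k. (G * (A powr q - q * A powr (q - 1) * A)) * p k + (G * q * A powr (q - 1)) * (p k * w k)) sums
      ((G * (A powr q - q * A powr (q - 1) * A)) * 1 + (G * q * A powr (q - 1)) * A)"
      by (intro sums_add sums_mult sp sw)
    moreover have "(G * (A powr q - q * A powr (q - 1) * A)) * 1 + (G * q * A powr (q - 1)) * A = G * A powr q"
      by (simp add: algebra_simps)
    moreover have "(G * (A powr q - q * A powr (q - 1) * A)) * p k + (G * q * A powr (q - 1)) * (p k * w k) = p k * b k" for k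
      by (simp add: b_def algebra_simps)
    ultimately show ?thesis by simp
  qed
  have le1: "L - f lam \<le> G * A powr q"
  proof (rule sums_le[OF _ sr sb])
    fix k show "p k * r k \<le> p k * b k"
      using rb[of k] p0[of k] mult_left_mono[of "r k" "b k" "p k"] by (auto simp: abs_le_iff)
  qed
  have le2: "- (L - f lam) \<le> G * A powr q"
  proof (rule sums_le[OF _ sums_minus[OF sr] sb])
    fix k show "- (p k * r k) \<le> p k * b k"
      using rb[of k] p0[of k] mult_left_mono[of "- r k" "b k" "p k"] by (auto simp: abs_le_iff)
  qed
  from le1 le2 show "\<bar>(\<Sum>k. pois (m * lam) k * (\<integral>\<omega>. f (T k \<omega>) \<partial>M)) - f lam\<bar>
           \<le> G * (lam * (1 + v) / m) powr (s / 2)"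
    by (simp add: L_def p_def e_def A_def q_def)
qed


lemma sum_moments:
  fixes X :: "nat \<Rightarrow> 'a \<Rightarrow> real"
  assumes P: "prob_space M"
    and Xrv: "\<forall>i. X i \<in> borel_measurable M"
    and ind: "prob_space.indep_vars M (\<lambda>_. borel) X UNIV"
    and ident: "\<forall>i. distr M borel (X i) = distr M borel (X 0)"
    and sq: "integrable M (\<lambda>\<omega>. (X 0 \<omega>)\<^sup>2)"
  defines "a \<equiv> (\<integral>\<omega>. X 0 \<omega> \<partial>M)"
  defines "\<sigma>2 \<equiv> (\<integral>\<omega>. (X 0 \<omega> - a)\<^sup>2 \<partial>M)"
  shows "integrable M (\<lambda>\<omega>. \<Sum>j<k. X j \<omega>)"
    and "integrable M (\<lambda>\<omega>. (\<Sum>j<k. X j \<omega>)\<^sup>2)"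
    and "(\<integral>\<omega>. (\<Sum>j<k. X j \<omega>) \<partial>M) = real k * a"
    and "(\<integral>\<omega>. ((\<Sum>j<k. X j \<omega>) - real k * a)\<^sup>2 \<partial>M) = real k * \<sigma>2"
proof -
  interpret prob_space M by fact
  have Xm[measurable]: "X i \<in> borel_measurable M" for i using Xrv by auto
  have tr_int: "integrable M (\<lambda>\<omega>. g (X i \<omega>)) \<longleftrightarrow> integrable M (\<lambda>\<omega>. g (X 0 \<omega>))"
    if g[measurable]: "g \<in> borel_measurable borel" for g :: "real \<Rightarrow> real" and i
  proof -
    have "integrable M (\<lambda>\<omega>. g (X i \<omega>)) \<longleftrightarrow> integrable (distr M borel (X i)) g"
      using integrable_distr_eq[of "X i" M borel g] by simp
    also have "\<dots> \<longleftrightarrow> integrable (distr M borel (X 0)) g" by (simp only: ident[rule_format, of i])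
    also have "\<dots> \<longleftrightarrow> integrable M (\<lambda>\<omega>. g (X 0 \<omega>))"
      using integrable_distr_eq[of "X 0" M borel g] by simp
    finally show ?thesis .
  qed
  have tr_eq: "(\<integral>\<omega>. g (X i \<omega>) \<partial>M) = (\<integral>\<omega>. g (X 0 \<omega>) \<partial>M)"
    if g[measurable]: "g \<in> borel_measurable borel" for g :: "real \<Rightarrow> real" and i
  proof -
    have "(\<integral>\<omega>. g (X i \<omega>) \<partial>M) = integral\<^sup>L (distr M borel (X i)) g"
      using integral_distr[of "X i" M borel g] by simp
    also have "\<dots> = integral\<^sup>L (distr M borel (X 0)) g" by (simp only: ident[rule_format, of i])
    also have "\<dots> = (\<integral>\<omega>. g (X 0 \<omega>) \<partial>M)"
      using integral_distr[of "X 0" M borel g] by simp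
    finally show ?thesis .
  qed
  have i0: "integrable M (X 0)"
    by (rule square_integrable_imp_integrable[OF Xm sq])
  define Z where "Z i \<omega> = X i \<omega> - a" for i \<omega>
  have Zm[measurable]: "Z i \<in> borel_measurable M" for i unfolding Z_def by measurable
  have Zsq0: "integrable M (\<lambda>\<omega>. (X 0 \<omega> - a)\<^sup>2)"
    using sq i0 by (simp add: power2_diff)
  have Zi: "integrable M (Z i)" for i
    using tr_int[of "\<lambda>x. x - a" i] i0 unfolding Z_def by simp
  have Zsqi: "integrable M (\<lambda>\<omega>. (Z i \<omega>)\<^sup>2)" for i
    using tr_int[of "\<lambda>x. (x - a)\<^sup>2" i] Zsq0 unfolding Z_def by simp
  have EZ: "(\<integral>\<omega>. Z i \<omega> \<partial>M) = 0" for i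
  proof -
    have "(\<integral>\<omega>. Z i \<omega> \<partial>M) = (\<integral>\<omega>. X 0 \<omega> - a \<partial>M)"
      unfolding Z_def by (rule tr_eq) simp
    also have "\<dots> = 0" using i0 by (simp add: prob_space a_def)
    finally show ?thesis .
  qed
  have EZ2: "(\<integral>\<omega>. (Z i \<omega>)\<^sup>2 \<partial>M) = \<sigma>2" for i
    unfolding Z_def \<sigma>2_def by (rule tr_eq) simp
  have indZ: "indep_vars (\<lambda>_. borel) Z UNIV"
    using indep_vars_compose2[OF ind, of "\<lambda>i x. x - a" "\<lambda>_. borel"] unfolding Z_def by simp
  have cross: "integrable M (\<lambda>\<omega>. Z i \<omega> * Z j \<omega>) \<and> (\<integral>\<omega>. Z i \<omega> * Z j \<omega> \<partial>M) = (if i = j then \<sigma>2 else 0)" for i j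
  proof (cases "i = j")
    case True then show ?thesis using Zsqi[of i] EZ2[of i] by (simp add: power2_eq_square)
  next
    case False
    have I: "indep_vars (\<lambda>_. borel) Z {i, j}" by (rule indep_vars_subset[OF indZ]) auto
    have "(\<integral>\<omega>. (\<Prod>l\<in>{i, j}. Z l \<omega>) \<partial>M) = (\<Prod>l\<in>{i, j}. \<integral>\<omega>. Z l \<omega> \<partial>M)"
      by (rule indep_vars_lebesgue_integral[OF _ I]) (auto intro: Zi)
    moreover have "integrable M (\<lambda>\<omega>. (\<Prod>l\<in>{i, j}. Z l \<omega>))"
      by (rule indep_vars_integrable[OF _ I]) (auto intro: Zi)
    ultimately show ?thesis using False EZ by simp
  qed
  have SX: "(\<Sum>j<k. X j \<omega>) = (\<Sum>j<k. Z j \<omega>) + real k * a" for \<omega>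
    by (simp add: Z_def sum_subtractf)
  have iS: "integrable M (\<lambda>\<omega>. \<Sum>j<k. Z j \<omega>)" using Zi by auto
  have ES: "(\<integral>\<omega>. (\<Sum>j<k. Z j \<omega>) \<partial>M) = 0" using Zi EZ by (simp add: integral_sum)
  have sqS: "(\<Sum>j<k. Z j \<omega>)\<^sup>2 = (\<Sum>i<k. \<Sum>j<k. Z i \<omega> * Z j \<omega>)" for \<omega>
    by (simp add: power2_eq_square sum_product)
  have iS2: "integrable M (\<lambda>\<omega>. (\<Sum>j<k. Z j \<omega>)\<^sup>2)"
    unfolding sqS using cross by (auto intro!: integrable_sum)
  have ES2: "(\<integral>\<omega>. (\<Sum>j<k. Z j \<omega>)\<^sup>2 \<partial>M) = real k * \<sigma>2"
  proof -
    have "(\<integral>\<omega>. (\<Sum>j<k. Z j \<omega>)\<^sup>2 \<partial>M) = (\<Sum>i<k. \<Sum>j<k. \<integral>\<omega>. Z i \<omega> * Z j \<omega> \<partial>M)"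
      unfolding sqS using cross by (simp add: integral_sum integrable_sum)
    also have "\<dots> = (\<Sum>i<k. \<Sum>j<k. if i = j then \<sigma>2 else 0)" using cross by simp
    also have "\<dots> = real k * \<sigma>2" by simp
    finally show ?thesis .
  qed
  show "integrable M (\<lambda>\<omega>. \<Sum>j<k. X j \<omega>)" unfolding SX using iS by simp
  show "integrable M (\<lambda>\<omega>. (\<Sum>j<k. X j \<omega>)\<^sup>2)"
    unfolding SX power2_sum using iS iS2 by simp
  show "(\<integral>\<omega>. (\<Sum>j<k. X j \<omega>) \<partial>M) = real k * a"
    unfolding SX using iS ES by (simp add: prob_space)
  show "(\<integral>\<omega>. ((\<Sum>j<k. X j \<omega>) - real k * a)\<^sup>2 \<partial>M) = real k * \<sigma>2"
    unfolding SX using ES2 by simp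
qed


lemma rc_eventually:
  fixes F :: "real \<Rightarrow> nat"
  assumes c: "continuous (at_right t) (\<lambda>u. real (F u))"
    and u: "u \<longlonglongrightarrow> t" and ut: "\<And>j. t \<le> u j"
  shows "eventually (\<lambda>j. F (u j) = F t) sequentially"
proof -
  have "continuous (at t within {t..}) (\<lambda>u. real (F u))"
    using c by (simp add: at_within_Ici_at_right)
  then have "((\<lambda>u. real (F u)) \<circ> u) \<longlonglongrightarrow> real (F t)"
    using u ut unfolding continuous_within_sequentially by auto
  then have "eventually (\<lambda>j. dist (real (F (u j))) (real (F t)) < 1/2) sequentially"
    using tendsto_iff[THEN iffD1, of "(\<lambda>u. real (F u)) \<circ> u" "real (F t)" sequentially, rule_format, of "1/2"]
    by (simp add: o_def)
  then show ?thesis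
  proof (rule eventually_mono)
    fix j assume "dist (real (F (u j))) (real (F t)) < 1/2"
    then have "\<bar>real (F (u j)) - real (F t)\<bar> < 1/2" by (simp add: dist_real_def)
    then show "F (u j) = F t" by linarith
  qed
qed

lemma indep_rv_var:
  assumes P: "prob_space M" and I: "indep_rv M M1 X1 M2 X2"
  shows "prob_space.indep_var M M1 X1 M2 X2"
proof -
  interpret prob_space M by fact
  let ?A = "{X1 -` A \<inter> space M | A. A \<in> sets M1}"
  let ?B = "{X2 -` A \<inter> space M | A. A \<in> sets M2}"
  have m: "X1 \<in> measurable M M1" "X2 \<in> measurable M M2" and ind: "indep_set ?A ?B"
    using I unfolding indep_rv_def by auto
  have st: "Int_stable (case_bool ?A ?B i)" for i
    apply (cases i)
     apply (auto simp: Int_stable_def)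
     apply (rule_tac x="A \<inter> Aa" in exI, auto)+
    done
  have "indep_sets (case_bool ?A ?B) UNIV" using ind unfolding indep_set_def .
  then have "indep_sets (\<lambda>i. sigma_sets (space M) (case_bool ?A ?B i)) UNIV"
    using indep_sets_sigma_sets_iff[of UNIV "case_bool ?A ?B"] st by blast
  moreover have "(\<lambda>i. sigma_sets (space M) (case_bool ?A ?B i)) = case_bool (sigma_sets (space M) ?A) (sigma_sets (space M) ?B)"
    by (rule ext) (simp split: bool.split)
  ultimately have "indep_set (sigma_sets (space M) ?A) (sigma_sets (space M) ?B)"
    unfolding indep_set_def by simp
  then show ?thesis using m by (simp add: indep_var_eq)
qed

lemma indep_rv_compose:
  assumes P: "prob_space M" and I: "indep_rv M M1 X1 M2 X2"
    and h1: "h1 \<in> measurable M1 N1" and h2: "h2 \<in> measurable M2 N2"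
  shows "indep_rv M N1 (\<lambda>\<omega>. h1 (X1 \<omega>)) N2 (\<lambda>\<omega>. h2 (X2 \<omega>))"
proof -
  interpret prob_space M by fact
  have m: "X1 \<in> measurable M M1" "X2 \<in> measurable M M2"
    and ind: "indep_set {X1 -` A \<inter> space M | A. A \<in> sets M1} {X2 -` A \<inter> space M | A. A \<in> sets M2}"
    using I unfolding indep_rv_def by auto
  have m': "(\<lambda>\<omega>. h1 (X1 \<omega>)) \<in> measurable M N1" "(\<lambda>\<omega>. h2 (X2 \<omega>)) \<in> measurable M N2"
    using m h1 h2 by auto
  have sub1: "(\<lambda>\<omega>. h1 (X1 \<omega>)) -` A \<inter> space M \<in> {X1 -` A \<inter> space M | A. A \<in> sets M1}" if "A \<in> sets N1" for A
  proof -
    have "(\<lambda>\<omega>. h1 (X1 \<omega>)) -` A \<inter> space M = X1 -` (h1 -` A \<inter> space M1) \<inter> space M"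
      using m(1) by (auto simp: measurable_def)
    moreover have "h1 -` A \<inter> space M1 \<in> sets M1" using h1 that by (rule measurable_sets)
    ultimately show ?thesis by blast
  qed
  have sub2: "(\<lambda>\<omega>. h2 (X2 \<omega>)) -` A \<inter> space M \<in> {X2 -` A \<inter> space M | A. A \<in> sets M2}" if "A \<in> sets N2" for A
  proof -
    have "(\<lambda>\<omega>. h2 (X2 \<omega>)) -` A \<inter> space M = X2 -` (h2 -` A \<inter> space M2) \<inter> space M"
      using m(2) by (auto simp: measurable_def)
    moreover have "h2 -` A \<inter> space M2 \<in> sets M2" using h2 that by (rule measurable_sets)
    ultimately show ?thesis by blast
  qed
  let ?A = "{X1 -` A \<inter> space M | A. A \<in> sets M1}"
  let ?B = "{X2 -` A \<inter> space M | A. A \<in> sets M2}"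
  let ?A' = "{(\<lambda>\<omega>. h1 (X1 \<omega>)) -` A \<inter> space M | A. A \<in> sets N1}"
  let ?B' = "{(\<lambda>\<omega>. h2 (X2 \<omega>)) -` A \<inter> space M | A. A \<in> sets N2}"
  have ind': "?A \<subseteq> events" "?B \<subseteq> events" "\<forall>a\<in>?A. \<forall>b\<in>?B. prob (a \<inter> b) = prob a * prob b"
    using ind unfolding indep_sets2_eq by auto
  have sA: "?A' \<subseteq> ?A" using sub1 by auto
  have sB: "?B' \<subseteq> ?B" using sub2 by auto
  have "?A' \<subseteq> events" using sA ind'(1) by (rule order_trans)
  moreover have "?B' \<subseteq> events" using sB ind'(2) by (rule order_trans)
  moreover have "\<forall>a\<in>?A'. \<forall>b\<in>?B'. prob (a \<inter> b) = prob a * prob b"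
  proof (intro ballI)
    fix a b assume "a \<in> ?A'" "b \<in> ?B'"
    have "a \<in> ?A" using sA \<open>a \<in> ?A'\<close> by (rule subsetD)
    moreover have "b \<in> ?B" using sB \<open>b \<in> ?B'\<close> by (rule subsetD)
    ultimately show "prob (a \<inter> b) = prob a * prob b" using ind'(3) by blast
  qed
  ultimately have "indep_set ?A' ?B'" unfolding indep_sets2_eq by blast
  then show ?thesis using m' unfolding indep_rv_def by simp
qed

lemma indep_count_seq:
  fixes Nn :: "'a \<Rightarrow> nat" and Xs :: "'a \<Rightarrow> 'i \<Rightarrow> real" and g :: "('i \<Rightarrow> real) \<Rightarrow> real"
  assumes P: "prob_space M"
    and I: "indep_rv M (count_space UNIV) Nn (Pi\<^sub>M UNIV (\<lambda>_. borel)) Xs"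
    and g: "g \<in> borel_measurable (Pi\<^sub>M UNIV (\<lambda>_. borel))"
    and gi: "integrable M (\<lambda>\<omega>. g (Xs \<omega>))"
  shows "(\<integral>\<omega>. indicator {\<omega> \<in> space M. Nn \<omega> = k} \<omega> * g (Xs \<omega>) \<partial>M)
          = measure M {\<omega> \<in> space M. Nn \<omega> = k} * (\<integral>\<omega>. g (Xs \<omega>) \<partial>M)"
proof -
  interpret prob_space M by fact
  have Nm: "Nn \<in> measurable M (count_space UNIV)" using I unfolding indep_rv_def by auto
  have h: "(\<lambda>n. indicator {k} n :: real) \<in> borel_measurable (count_space UNIV)" by simp
  have iv2: "indep_var borel ((\<lambda>n. indicator {k} n :: real) \<circ> Nn) borel (g \<circ> Xs)"
    using indep_rv_var[OF P indep_rv_compose[OF P I h g]] by (simp add: o_def)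
  have ev: "{\<omega> \<in> space M. Nn \<omega> = k} \<in> sets M"
    using measurable_sets[OF Nm, of "{k}"] by (simp add: vimage_def Int_def conj_commute)
  have ind_eq: "indicator {\<omega> \<in> space M. Nn \<omega> = k} \<omega> = (indicator {k} (Nn \<omega>) :: real)" if "\<omega> \<in> space M" for \<omega>
    using that by (auto simp: indicator_def)
  have i1: "integrable M (\<lambda>\<omega>. indicator {k} (Nn \<omega>) :: real)"
  proof -
    have "integrable M (\<lambda>\<omega>. indicator {\<omega> \<in> space M. Nn \<omega> = k} \<omega> :: real)"
      using ev by (intro integrable_real_indicator) (simp_all add: less_top[symmetric])
    moreover have "integrable M (\<lambda>\<omega>. indicator {k} (Nn \<omega>) :: real) = integrable M (\<lambda>\<omega>. indicator {\<omega> \<in> space M. Nn \<omega> = k} \<omega> :: real)"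
      by (rule Bochner_Integration.integrable_cong) (auto simp: ind_eq)
    ultimately show ?thesis by simp
  qed
  have "(\<integral>\<omega>. indicator {\<omega> \<in> space M. Nn \<omega> = k} \<omega> * g (Xs \<omega>) \<partial>M)
      = (\<integral>\<omega>. indicator {k} (Nn \<omega>) * g (Xs \<omega>) \<partial>M)"
    by (rule Bochner_Integration.integral_cong) (auto simp: ind_eq)
  also have "\<dots> = (\<integral>\<omega>. indicator {k} (Nn \<omega>) \<partial>M) * (\<integral>\<omega>. g (Xs \<omega>) \<partial>M)"
    using indep_var_lebesgue_integral[OF iv2] i1 gi by (simp add: o_def)
  also have "(\<integral>\<omega>. indicator {k} (Nn \<omega>) \<partial>M) = (\<integral>\<omega>. indicator {\<omega> \<in> space M. Nn \<omega> = k} \<omega> \<partial>M :: real)"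
    by (rule Bochner_Integration.integral_cong) (auto simp: ind_eq)
  also have "\<dots> = measure M {\<omega> \<in> space M. Nn \<omega> = k}" using ev by simp
  finally show ?thesis .
qed


lemma pois_cont: "continuous_on UNIV (\<lambda>x. pois x k)"
  unfolding pois_def by (intro continuous_intros) auto

lemma pois_law:
  fixes N :: "real \<Rightarrow> 'a \<Rightarrow> nat" and \<Lambda> :: "'a \<Rightarrow> real"
  assumes P: "prob_space M"
    and pp: "std_poisson_process M N"
    and ind: "indep_rv M (Pi\<^sub>M UNIV (\<lambda>_. count_space UNIV)) (\<lambda>\<omega> t. N t \<omega>) borel \<Lambda>"
    and pos: "\<forall>\<omega>\<in>space M. \<Lambda> \<omega> > 0"
    and m: "0 < m"
    and Nm: "(\<lambda>\<omega>. N (m * \<Lambda> \<omega>) \<omega>) \<in> measurable M (count_space UNIV)"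
  shows "measure M {\<omega>\<in>space M. N (m * \<Lambda> \<omega>) \<omega> = k} = (\<integral>\<omega>. pois (m * \<Lambda> \<omega>) k \<partial>M)"
proof -
  interpret prob_space M by fact
  have Nt[measurable]: "N t \<in> measurable M (count_space UNIV)" for t
    using pp unfolding std_poisson_process_def by auto
  have N0: "\<And>\<omega>. \<omega> \<in> space M \<Longrightarrow> N 0 \<omega> = 0"
    using pp unfolding std_poisson_process_def by auto
  have rc: "\<And>\<omega> t. \<omega> \<in> space M \<Longrightarrow> 0 \<le> t \<Longrightarrow> continuous (at_right t) (\<lambda>u. real (N u \<omega>))"
    using pp unfolding std_poisson_process_def by auto
  have law: "\<And>u t j. 0 \<le> u \<Longrightarrow> u \<le> t \<Longrightarrow>
        measure M {\<omega> \<in> space M. N t \<omega> - N u \<omega> = j} = exp (-(t - u)) * (t - u) ^ j / fact j"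
    using pp unfolding std_poisson_process_def by blast
  have lawt: "measure M {\<omega> \<in> space M. N t \<omega> = k} = pois t k" if "0 \<le> t" for t
  proof -
    have "{\<omega> \<in> space M. N t \<omega> - N 0 \<omega> = k} = {\<omega> \<in> space M. N t \<omega> = k}"
      using N0 by auto
    then show ?thesis using law[of 0 t k] that by (simp add: pois_def)
  qed
  have \<Phi>m: "(\<lambda>\<omega> t. N t \<omega>) \<in> measurable M (Pi\<^sub>M UNIV (\<lambda>_. count_space UNIV))"
    and \<Lambda>m[measurable]: "\<Lambda> \<in> borel_measurable M"
    and indset: "indep_set {(\<lambda>\<omega> t. N t \<omega>) -` A \<inter> space M | A. A \<in> sets (Pi\<^sub>M UNIV (\<lambda>_. count_space UNIV))}
                           {\<Lambda> -` B \<inter> space M | B. B \<in> sets borel}"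
    using ind unfolding indep_rv_def by auto
  have evA: "{\<omega> \<in> space M. N r \<omega> = k} \<in> {(\<lambda>\<omega> t. N t \<omega>) -` A \<inter> space M | A. A \<in> sets (Pi\<^sub>M UNIV (\<lambda>_. count_space UNIV))}" for r
  proof -
    let ?S = "(\<lambda>\<phi>. \<phi> r) -` {k} \<inter> space (Pi\<^sub>M UNIV (\<lambda>_. count_space UNIV :: nat measure))"
    have S: "?S \<in> sets (Pi\<^sub>M UNIV (\<lambda>_. count_space UNIV))"
      by (rule measurable_sets[OF measurable_component_singleton]) auto
    have eq: "(\<lambda>\<omega> t. N t \<omega>) -` ?S \<inter> space M = {\<omega> \<in> space M. N r \<omega> = k}"
      using measurable_space[OF \<Phi>m] by auto
    show ?thesis unfolding mem_Collect_eq
      by (rule exI[of _ ?S]) (simp only: eq S)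
  qed
  have evB: "\<Lambda> -` B \<inter> space M \<in> {\<Lambda> -` B \<inter> space M | B. B \<in> sets borel}" if "B \<in> sets borel" for B
    using that by auto
  define c where "c j x = nat \<lceil>real (Suc j) * m * x\<rceil>" for j x
  define q where "q j x = real (c j x) / real (Suc j)" for j x
  have cm[measurable]: "c j \<in> measurable borel (count_space UNIV)" for j
    unfolding c_def by measurable
  have cLm: "(\<lambda>\<omega>. c j (\<Lambda> \<omega>)) \<in> measurable M (count_space UNIV)" for j
    by measurable
  have q_ge: "m * x \<le> q j x" and q_le: "q j x \<le> m * x + inverse (real (Suc j))" if "0 < x" for j x
  proof -
    have y: "0 < real (Suc j) * m * x" using m that by simp
    then have "int (c j x) = \<lceil>real (Suc j) * m * x\<rceil>" unfolding c_def by simp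
    then have e: "real (c j x) = real_of_int \<lceil>real (Suc j) * m * x\<rceil>"
      by (metis of_int_of_nat_eq)
    have 1: "real (Suc j) * m * x \<le> real (c j x)" "real (c j x) < real (Suc j) * m * x + 1"
      unfolding e using ceiling_correct[of "real (Suc j) * m * x"] by linarith+
    have 2: "real (Suc j) > 0" by simp
    from 1 2 show "m * x \<le> q j x" unfolding q_def by (simp add: field_simps)
    have "q j x \<le> (real (Suc j) * m * x + 1) / real (Suc j)"
      unfolding q_def using 1(2) by (intro divide_right_mono) auto
    also have "\<dots> = m * x + inverse (real (Suc j))"
      using 2 by (simp add: field_simps)
    finally show "q j x \<le> m * x + inverse (real (Suc j))" .
  qed
  have q_lim: "(\<lambda>j. q j x) \<longlonglongrightarrow> m * x" if "0 < x" for x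
    by (rule tendsto_sandwich[OF _ _ tendsto_const LIMSEQ_inverse_real_of_nat_add])
       (use q_ge q_le that in auto)
  have q0: "0 \<le> q j x" for j x unfolding q_def by simp
  define E where "E j = {\<omega> \<in> space M. N (q j (\<Lambda> \<omega>)) \<omega> = k}" for j
  define E0 where "E0 = {\<omega> \<in> space M. N (m * \<Lambda> \<omega>) \<omega> = k}"
  have Pjm: "(\<lambda>\<omega>. N (q j (\<Lambda> \<omega>)) \<omega>) \<in> measurable M (count_space UNIV)" for j
  proof -
    have "(\<lambda>\<omega>. (\<lambda>i. N (real i / real (Suc j))) (c j (\<Lambda> \<omega>)) \<omega>) \<in> measurable M (count_space UNIV)"
      by (rule measurable_compose_countable'[OF _ cLm]) auto
    then show ?thesis by (simp add: q_def)
  qed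
  have Eev: "E j \<in> sets M" for j
    using measurable_sets[OF Pjm[of j], of "{k}"] unfolding E_def by (simp add: vimage_def Int_def conj_commute)
  have E0ev: "E0 \<in> sets M"
    using measurable_sets[OF Nm, of "{k}"] unfolding E0_def by (simp add: vimage_def Int_def conj_commute)
  have hm: "(\<lambda>\<omega>. pois (q j (\<Lambda> \<omega>)) k) \<in> borel_measurable M" for j
  proof -
    have "(\<lambda>\<omega>. (\<lambda>i \<omega>. pois (real i / real (Suc j)) k) (c j (\<Lambda> \<omega>)) \<omega>) \<in> borel_measurable M"
      by (rule measurable_compose_countable'[OF _ cLm]) auto
    then show ?thesis by (simp add: q_def)
  qed
  have h0m: "(\<lambda>\<omega>. pois (m * \<Lambda> \<omega>) k) \<in> borel_measurable M"
    unfolding pois_def by measurable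
  have stepj: "measure M (E j) = (\<integral>\<omega>. pois (q j (\<Lambda> \<omega>)) k \<partial>M)" for j
  proof -
    define A where "A i = {\<omega> \<in> space M. N (real i / real (Suc j)) \<omega> = k}" for i
    define B where "B i = \<Lambda> -` {x. c j x = i} \<inter> space M" for i
    define p where "p i = pois (real i / real (Suc j)) k" for i
    have Bb: "{x. c j x = i} \<in> sets borel" for i
      using measurable_sets[OF cm[of j], of "{i}"] by (simp add: vimage_def)
    have Bev: "B i \<in> sets M" for i unfolding B_def using Bb by (rule measurable_sets[OF \<Lambda>m])
    have AB: "measure M (A i \<inter> B i) = p i * measure M (B i)" for i
    proof -
      have "measure M (A i \<inter> B i) = measure M (A i) * measure M (B i)"
        unfolding A_def B_def by (rule indep_setD[OF indset evA evB[OF Bb]])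
      moreover have "measure M (A i) = p i" unfolding A_def p_def by (rule lawt) simp
      ultimately show ?thesis by simp
    qed
    have Eu: "E j = (\<Union>i. A i \<inter> B i)"
      unfolding E_def A_def B_def q_def by auto
    have "(\<lambda>i. measure M (A i \<inter> B i)) sums measure M (\<Union>i. A i \<inter> B i)"
    proof (rule measure_UNION)
      show "range (\<lambda>i. A i \<inter> B i) \<subseteq> sets M" using Eev Eu Bev by (auto simp: A_def) 
      show "disjoint_family (\<lambda>i. A i \<inter> B i)" by (auto simp: disjoint_family_on_def B_def)
      show "emeasure M (\<Union>i. A i \<inter> B i) \<noteq> \<infinity>" by simp
    qed
    then have s1: "(\<lambda>n. \<Sum>i<n. p i * measure M (B i)) \<longlonglongrightarrow> measure M (E j)"
      unfolding Eu sums_def AB .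
    define s where "s n \<omega> = (\<Sum>i<n. indicator (B i) \<omega> * p i)" for n \<omega>
    have sval: "s n \<omega> = (if c j (\<Lambda> \<omega>) < n then p (c j (\<Lambda> \<omega>)) else 0)" if "\<omega> \<in> space M" for n \<omega>
    proof -
      have "s n \<omega> = (\<Sum>i<n. if c j (\<Lambda> \<omega>) = i then p i else 0)"
        unfolding s_def using that by (intro sum.cong) (auto simp: B_def indicator_def)
      then show ?thesis by (simp add: sum.delta)
    qed
    have pb: "0 \<le> p i" "p i \<le> 1" for i unfolding p_def by (auto intro: pois_nonneg pois_le1)
    have hval: "pois (q j (\<Lambda> \<omega>)) k = p (c j (\<Lambda> \<omega>))" for \<omega> by (simp add: p_def q_def)
    have sm: "s n \<in> borel_measurable M" for n unfolding s_def using Bev by measurable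
    have "(\<lambda>n. integral\<^sup>L M (s n)) \<longlonglongrightarrow> (\<integral>\<omega>. pois (q j (\<Lambda> \<omega>)) k \<partial>M)"
    proof (rule integral_dominated_convergence[where w="\<lambda>_. 1"])
      show "(\<lambda>\<omega>. pois (q j (\<Lambda> \<omega>)) k) \<in> borel_measurable M" by (rule hm)
      show "s n \<in> borel_measurable M" for n by (rule sm)
      show "integrable M (\<lambda>_. 1::real)" by simp
      show "AE \<omega> in M. (\<lambda>n. s n \<omega>) \<longlonglongrightarrow> pois (q j (\<Lambda> \<omega>)) k"
      proof (rule AE_I2)
        fix \<omega> assume \<omega>: "\<omega> \<in> space M"
        have "eventually (\<lambda>n. s n \<omega> = pois (q j (\<Lambda> \<omega>)) k) sequentially"
          using eventually_gt_at_top[of "c j (\<Lambda> \<omega>)"]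
          by eventually_elim (simp add: sval[OF \<omega>] hval)
        then show "(\<lambda>n. s n \<omega>) \<longlonglongrightarrow> pois (q j (\<Lambda> \<omega>)) k" by (rule tendsto_eventually)
      qed
      show "AE \<omega> in M. norm (s n \<omega>) \<le> 1" for n
        by (rule AE_I2) (use pb in \<open>auto simp: sval\<close>)
    qed
    moreover have "integral\<^sup>L M (s n) = (\<Sum>i<n. p i * measure M (B i))" for n
    proof -
      have ii: "integrable M (\<lambda>\<omega>. indicator (B i) \<omega> * p i)" for i
        using Bev[of i] by (intro integrable_mult_left integrable_real_indicator) (simp_all add: less_top[symmetric])
      have "integral\<^sup>L M (s n) = (\<Sum>i<n. \<integral>\<omega>. indicator (B i) \<omega> * p i \<partial>M)"
        unfolding s_def using ii by (intro Bochner_Integration.integral_sum)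
      also have "\<dots> = (\<Sum>i<n. p i * measure M (B i))"
        using Bev by (intro sum.cong refl) (simp add: mult.commute)
      finally show ?thesis .
    qed
    ultimately have "(\<lambda>n. \<Sum>i<n. p i * measure M (B i)) \<longlonglongrightarrow> (\<integral>\<omega>. pois (q j (\<Lambda> \<omega>)) k \<partial>M)" by simp
    with s1 show ?thesis by (rule LIMSEQ_unique)
  qed
  have lim1: "(\<lambda>j. measure M (E j)) \<longlonglongrightarrow> measure M E0"
  proof -
    have "(\<lambda>j. integral\<^sup>L M (indicator (E j) :: 'a \<Rightarrow> real)) \<longlonglongrightarrow> integral\<^sup>L M (indicator E0)"
    proof (rule integral_dominated_convergence[where w="\<lambda>_. 1"])
      show "indicator E0 \<in> borel_measurable M" using E0ev by simp
      show "(indicator (E j) :: 'a \<Rightarrow> real) \<in> borel_measurable M" for j using Eev by simp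
      show "integrable M (\<lambda>_. 1::real)" by simp
      show "AE \<omega> in M. norm (indicator (E j) \<omega> :: real) \<le> 1" for j
        by (rule AE_I2) (simp add: indicator_def)
      show "AE \<omega> in M. (\<lambda>j. indicator (E j) \<omega> :: real) \<longlonglongrightarrow> indicator E0 \<omega>"
      proof (rule AE_I2)
        fix \<omega> assume \<omega>: "\<omega> \<in> space M"
        have lp: "0 < \<Lambda> \<omega>" using pos \<omega> by auto
        have "eventually (\<lambda>j. N (q j (\<Lambda> \<omega>)) \<omega> = N (m * \<Lambda> \<omega>) \<omega>) sequentially"
          by (rule rc_eventually[OF rc[OF \<omega>] q_lim[OF lp] q_ge[OF lp]]) (use m lp in simp)
        then have "eventually (\<lambda>j. (indicator (E j) \<omega> :: real) = indicator E0 \<omega>) sequentially"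
          by eventually_elim (simp add: E_def E0_def indicator_def \<omega>)
        then show "(\<lambda>j. indicator (E j) \<omega> :: real) \<longlonglongrightarrow> indicator E0 \<omega>" by (rule tendsto_eventually)
      qed
    qed
    then show ?thesis using Eev E0ev by simp
  qed
  have lim2: "(\<lambda>j. (\<integral>\<omega>. pois (q j (\<Lambda> \<omega>)) k \<partial>M)) \<longlonglongrightarrow> (\<integral>\<omega>. pois (m * \<Lambda> \<omega>) k \<partial>M)"
  proof (rule integral_dominated_convergence[where w="\<lambda>_. 1"])
    show "(\<lambda>\<omega>. pois (m * \<Lambda> \<omega>) k) \<in> borel_measurable M" by (rule h0m)
    show "(\<lambda>\<omega>. pois (q j (\<Lambda> \<omega>)) k) \<in> borel_measurable M" for j by (rule hm)
    show "integrable M (\<lambda>_. 1::real)" by simp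
    show "AE \<omega> in M. norm (pois (q j (\<Lambda> \<omega>)) k) \<le> 1" for j
      by (rule AE_I2) (simp add: pois_nonneg pois_le1 q0)
    show "AE \<omega> in M. (\<lambda>j. pois (q j (\<Lambda> \<omega>)) k) \<longlonglongrightarrow> pois (m * \<Lambda> \<omega>) k"
    proof (rule AE_I2)
      fix \<omega> assume \<omega>: "\<omega> \<in> space M"
      have lp: "0 < \<Lambda> \<omega>" using pos \<omega> by auto
      show "(\<lambda>j. pois (q j (\<Lambda> \<omega>)) k) \<longlonglongrightarrow> pois (m * \<Lambda> \<omega>) k"
        unfolding pois_def by (intro tendsto_intros q_lim[OF lp]) simp
    qed
  qed
  from lim1 have "(\<lambda>j. (\<integral>\<omega>. pois (q j (\<Lambda> \<omega>)) k \<partial>M)) \<longlonglongrightarrow> measure M E0"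
    using stepj by simp
  from LIMSEQ_unique[OF this lim2] show ?thesis unfolding E0_def .
qed


lemma core:
  fixes M :: "'a measure"
    and \<Lambda> :: "'a \<Rightarrow> real"
    and N :: "real \<Rightarrow> 'a \<Rightarrow> nat"
    and X :: "nat \<Rightarrow> 'a \<Rightarrow> real"
    and s m :: real and f :: "real \<Rightarrow> real"
  assumes P: "prob_space M"
    and Lam_rv: "\<Lambda> \<in> borel_measurable M"
    and Lam_pos: "\<forall>\<omega>\<in>space M. \<Lambda> \<omega> > 0"
    and N_pp: "std_poisson_process M N"
    and N_indep_Lam: "indep_rv M
          (Pi\<^sub>M UNIV (\<lambda>_. count_space UNIV)) (\<lambda>\<omega> t. N t \<omega>) borel \<Lambda>"
    and m: "m > 0"
    and X_rv: "\<forall>i. X i \<in> borel_measurable M"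
    and X_indep: "prob_space.indep_vars M (\<lambda>_. borel) X UNIV"
    and X_ident: "\<forall>i. distr M borel (X i) = distr M borel (X 0)"
    and X_sq: "integrable M (\<lambda>\<omega>. (X 0 \<omega>)\<^sup>2)"
    and a_ne: "(\<integral>\<omega>. X 0 \<omega> \<partial>M) \<noteq> 0"
    and NX: "indep_rv M
          (count_space UNIV) (\<lambda>\<omega>. N (m * \<Lambda> \<omega>) \<omega>)
          (Pi\<^sub>M UNIV (\<lambda>_. borel)) (\<lambda>\<omega> i. X i \<omega>)"
    and s_ge: "1 \<le> s" and s_le: "s \<le> 2"
    and f: "f \<in> zol_class s"
  defines "a \<equiv> (\<integral>\<omega>. X 0 \<omega> \<partial>M)"
  defines "\<sigma>2 \<equiv> prob_space.variance M (X 0)"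
  defines "G \<equiv> Gamma (1 + zol_alpha s) / Gamma (1 + s)"
  shows "ennreal \<bar>(\<integral>\<omega>. f ((\<Sum>j<N (m * \<Lambda> \<omega>) \<omega>. X j \<omega>) / (a * m)) \<partial>M) - (\<integral>\<omega>. f (\<Lambda> \<omega>) \<partial>M)\<bar>
         \<le> (\<integral>\<^sup>+\<omega>. ennreal (G * (\<Lambda> \<omega> * (1 + \<sigma>2 / a\<^sup>2) / m) powr (s / 2)) \<partial>M)"
proof -
  interpret prob_space M by fact
  have Xm[measurable]: "X i \<in> borel_measurable M" for i using X_rv by auto
  have \<Lambda>m[measurable]: "\<Lambda> \<in> borel_measurable M" by (rule Lam_rv)
  have a0: "a \<noteq> 0" using a_ne by (simp add: a_def)
  have \<sigma>2_def': "\<sigma>2 = (\<integral>\<omega>. (X 0 \<omega> - a)\<^sup>2 \<partial>M)" by (simp add: \<sigma>2_def a_def)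
  have \<sigma>2_nn: "0 \<le> \<sigma>2" unfolding \<sigma>2_def' by simp
  define v where "v = \<sigma>2 / a\<^sup>2"
  have v0: "0 \<le> v" unfolding v_def using \<sigma>2_nn by simp
  obtain B where fB: "\<And>x. \<bar>f x\<bar> \<le> B" using zol_bounded[OF f] by blast
  obtain D where tay: "\<And>x y. \<bar>f x - f y - D y * (x - y)\<bar> \<le> G * \<bar>x - y\<bar> powr s"
    using zol_taylor[OF s_ge s_le f] unfolding G_def by blast
  have B0: "0 \<le> B" using fB[of 0] by linarith
  have fm[measurable]: "f \<in> borel_measurable borel"
    by (rule borel_measurable_continuous_onI[OF zol_cont[OF s_ge s_le f]])
  have G0: "0 \<le> G" unfolding G_def
    using s_ge ceiling_correct[of s] by (intro divide_nonneg_nonneg less_imp_le[OF Gamma_real_pos]) (auto simp: zol_alpha_def zol_m_def)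
  define T where "T k \<omega> = (\<Sum>j<k. X j \<omega>) / (a * m)" for k \<omega>
  note mom = sum_moments[OF P X_rv X_indep X_ident X_sq, folded a_def, folded \<sigma>2_def']
  have Tm[measurable]: "T k \<in> borel_measurable M" for k unfolding T_def by measurable
  have Ti: "integrable M (T k)" for k unfolding T_def using mom(1) by simp
  have Ti2: "integrable M (\<lambda>\<omega>. (T k \<omega>)\<^sup>2)" for k
    unfolding T_def using mom(2) by (simp add: power_divide)
  have ET: "(\<integral>\<omega>. T k \<omega> \<partial>M) = real k / m" for k
    unfolding T_def using mom(3) a0 m by simp
  have VT: "(\<integral>\<omega>. (T k \<omega> - real k / m)\<^sup>2 \<partial>M) = real k * v / m\<^sup>2" for k
  proof -
    have "(\<lambda>\<omega>. (T k \<omega> - real k / m)\<^sup>2) = (\<lambda>\<omega>. ((\<Sum>j<k. X j \<omega>) - real k * a)\<^sup>2 / (a * m)\<^sup>2)"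
      unfolding T_def using a0 m by (intro ext) (simp add: field_simps)
    then show ?thesis using mom(4) a0 m by (simp add: v_def power_mult_distrib)
  qed
  define e where "e k = (\<integral>\<omega>. f (T k \<omega>) \<partial>M)" for k
  define L where "L x = (\<Sum>k. pois (m * x) k * e k)" for x
  have PL: "summable (\<lambda>k. pois (m * x) k * e k)"
    "\<bar>L x - f x\<bar> \<le> G * (x * (1 + v) / m) powr (s / 2)" if "0 < x" for x
    using per_lambda[OF P fB fm tay G0 s_ge s_le Tm Ti Ti2 ET VT m v0 that]
    unfolding e_def L_def by auto
  define Nn where "Nn \<omega> = N (m * \<Lambda> \<omega>) \<omega>" for \<omega>
  have Nnm: "Nn \<in> measurable M (count_space UNIV)" using NX unfolding indep_rv_def Nn_def by auto
  define S where "S \<omega> = T (Nn \<omega>) \<omega>" for \<omega>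
  have Sm: "S \<in> borel_measurable M"
    unfolding S_def by (rule measurable_compose_countable'[OF _ Nnm]) auto
  have fSm: "(\<lambda>\<omega>. f (S \<omega>)) \<in> borel_measurable M" using Sm by measurable
  have fTi: "integrable M (\<lambda>\<omega>. f (T k \<omega>))" for k
    by (rule integrable_const_bound[where B=B]) (use fB in auto)
  have eB: "\<bar>e k\<bar> \<le> B" for k
  proof -
    have "\<bar>e k\<bar> \<le> (\<integral>\<omega>. \<bar>f (T k \<omega>)\<bar> \<partial>M)" unfolding e_def by (rule integral_abs_bound)
    also have "\<dots> \<le> (\<integral>\<omega>. B \<partial>M)" using fB fTi by (intro integral_mono) auto
    finally show ?thesis by (simp add: prob_space)
  qed
  have perk: "(\<integral>\<omega>. indicator {\<omega> \<in> space M. Nn \<omega> = k} \<omega> * f (T k \<omega>) \<partial>M)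
      = (\<integral>\<omega>. pois (m * \<Lambda> \<omega>) k \<partial>M) * e k" for k
  proof -
    define g where "g x = f ((\<Sum>j<k. x j) / (a * m))" for x :: "nat \<Rightarrow> real"
    have gm: "g \<in> borel_measurable (Pi\<^sub>M UNIV (\<lambda>_. borel))" unfolding g_def by measurable
    have gi: "integrable M (\<lambda>\<omega>. g (\<lambda>i. X i \<omega>))" using fTi[of k] by (simp add: g_def T_def)
    have "(\<integral>\<omega>. indicator {\<omega> \<in> space M. Nn \<omega> = k} \<omega> * g (\<lambda>i. X i \<omega>) \<partial>M)
        = measure M {\<omega> \<in> space M. Nn \<omega> = k} * (\<integral>\<omega>. g (\<lambda>i. X i \<omega>) \<partial>M)"
      by (rule indep_count_seq[OF P NX[folded Nn_def] gm gi])
    moreover have "measure M {\<omega> \<in> space M. Nn \<omega> = k} = (\<integral>\<omega>. pois (m * \<Lambda> \<omega>) k \<partial>M)"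
      unfolding Nn_def by (rule pois_law[OF P N_pp N_indep_Lam Lam_pos m Nnm[unfolded Nn_def]])
    ultimately show ?thesis by (simp add: g_def T_def e_def)
  qed
  define u where "u K \<omega> = (\<Sum>k<K. indicator {\<omega> \<in> space M. Nn \<omega> = k} \<omega> * f (T k \<omega>))" for K \<omega>
  define w where "w K \<omega> = (\<Sum>k<K. pois (m * \<Lambda> \<omega>) k * e k)" for K \<omega>
  have ev: "{\<omega> \<in> space M. Nn \<omega> = k} \<in> sets M" for k
    using measurable_sets[OF Nnm, of "{k}"] by (simp add: vimage_def Int_def conj_commute)
  have uval: "u K \<omega> = (if Nn \<omega> < K then f (S \<omega>) else 0)" if "\<omega> \<in> space M" for K \<omega>
  proof -
    have "u K \<omega> = (\<Sum>k<K. if Nn \<omega> = k then f (T k \<omega>) else 0)"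
      unfolding u_def using that by (intro sum.cong) (auto simp: indicator_def)
    then show ?thesis by (simp add: sum.delta S_def)
  qed
  have int_u: "integral\<^sup>L M (u K) = integral\<^sup>L M (w K)" for K
  proof -
    have iu: "integrable M (\<lambda>\<omega>. indicator {\<omega> \<in> space M. Nn \<omega> = k} \<omega> * f (T k \<omega>))" for k
      using integrable_real_mult_indicator[OF ev[of k] fTi[of k]] by (simp add: mult.commute)
    have ip: "integrable M (\<lambda>\<omega>. pois (m * \<Lambda> \<omega>) k)" for k
    proof (rule integrable_const_bound[where B=1])
      show "AE \<omega> in M. norm (pois (m * \<Lambda> \<omega>) k) \<le> 1"
      proof (rule AE_I2)
        fix \<omega> assume "\<omega> \<in> space M"
        then have x0: "0 \<le> m * \<Lambda> \<omega>" using Lam_pos m by (simp add: less_imp_le)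
        show "norm (pois (m * \<Lambda> \<omega>) k) \<le> 1"
          using pois_nonneg[OF x0, of k] pois_le1[OF x0, of k] by simp
      qed
      show "(\<lambda>\<omega>. pois (m * \<Lambda> \<omega>) k) \<in> borel_measurable M" unfolding pois_def by measurable
    qed
    have "integral\<^sup>L M (u K) = (\<Sum>k<K. \<integral>\<omega>. indicator {\<omega> \<in> space M. Nn \<omega> = k} \<omega> * f (T k \<omega>) \<partial>M)"
      unfolding u_def using iu by (intro Bochner_Integration.integral_sum)
    also have "\<dots> = (\<Sum>k<K. (\<integral>\<omega>. pois (m * \<Lambda> \<omega>) k \<partial>M) * e k)" by (simp add: perk)
    also have "\<dots> = (\<Sum>k<K. \<integral>\<omega>. pois (m * \<Lambda> \<omega>) k * e k \<partial>M)" by simp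
    also have "\<dots> = integral\<^sup>L M (w K)"
      unfolding w_def using ip by (intro Bochner_Integration.integral_sum[symmetric]) auto
    finally show ?thesis .
  qed
  have lim_u: "(\<lambda>K. integral\<^sup>L M (u K)) \<longlonglongrightarrow> (\<integral>\<omega>. f (S \<omega>) \<partial>M)"
  proof (rule integral_dominated_convergence[where w="\<lambda>_. B"])
    show "(\<lambda>\<omega>. f (S \<omega>)) \<in> borel_measurable M" by (rule fSm)
    show "u K \<in> borel_measurable M" for K unfolding u_def using ev by measurable
    show "integrable M (\<lambda>_. B)" by simp
    show "AE \<omega> in M. (\<lambda>K. u K \<omega>) \<longlonglongrightarrow> f (S \<omega>)"
    proof (rule AE_I2)
      fix \<omega> assume \<omega>: "\<omega> \<in> space M"
      have "eventually (\<lambda>K. u K \<omega> = f (S \<omega>)) sequentially"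
        using eventually_gt_at_top[of "Nn \<omega>"] by eventually_elim (simp add: uval[OF \<omega>])
      then show "(\<lambda>K. u K \<omega>) \<longlonglongrightarrow> f (S \<omega>)" by (rule tendsto_eventually)
    qed
    show "AE \<omega> in M. norm (u K \<omega>) \<le> B" for K
      by (rule AE_I2) (use B0 fB in \<open>auto simp: uval\<close>)
  qed
  have Lm: "(\<lambda>\<omega>. L (\<Lambda> \<omega>)) \<in> borel_measurable M"
  proof (rule borel_measurable_LIMSEQ_real[where u=w])
    fix \<omega> assume "\<omega> \<in> space M"
    then have "0 < \<Lambda> \<omega>" using Lam_pos by auto
    then show "(\<lambda>K. w K \<omega>) \<longlonglongrightarrow> L (\<Lambda> \<omega>)"
      unfolding w_def L_def by (rule summable_LIMSEQ[OF PL(1)])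
  next
    fix K show "w K \<in> borel_measurable M" unfolding w_def pois_def by measurable
  qed
  have wB: "\<bar>w K \<omega>\<bar> \<le> B" if "\<omega> \<in> space M" for K \<omega>
  proof -
    have x0: "0 \<le> m * \<Lambda> \<omega>" using Lam_pos that m by (simp add: less_imp_le)
    have "\<bar>w K \<omega>\<bar> \<le> (\<Sum>k<K. pois (m * \<Lambda> \<omega>) k * B)"
      unfolding w_def using x0 eB
      by (intro order_trans[OF sum_abs] sum_mono) (simp add: abs_mult pois_nonneg mult_left_mono)
    also have "\<dots> = B * (\<Sum>k<K. pois (m * \<Lambda> \<omega>) k)" by (simp add: sum_distrib_left mult.commute)
    also have "\<dots> \<le> B * 1"
    proof (rule mult_left_mono)
      show "(\<Sum>k<K. pois (m * \<Lambda> \<omega>) k) \<le> 1"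
        using sum_le_suminf[OF sums_summable[OF pois_sums0], of "{..<K}"] sums_unique[OF pois_sums0] x0
        by (simp add: pois_nonneg)
      show "0 \<le> B" using fB[of 0] by simp
    qed
    finally show ?thesis by simp
  qed
  have lim_w: "(\<lambda>K. integral\<^sup>L M (w K)) \<longlonglongrightarrow> (\<integral>\<omega>. L (\<Lambda> \<omega>) \<partial>M)"
  proof (rule integral_dominated_convergence[where w="\<lambda>_. B"])
    show "(\<lambda>\<omega>. L (\<Lambda> \<omega>)) \<in> borel_measurable M" by (rule Lm)
    show "w K \<in> borel_measurable M" for K unfolding w_def pois_def by measurable
    show "integrable M (\<lambda>_. B)" by simp
    show "AE \<omega> in M. (\<lambda>K. w K \<omega>) \<longlonglongrightarrow> L (\<Lambda> \<omega>)"
    proof (rule AE_I2)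
      fix \<omega> assume "\<omega> \<in> space M"
      then have "0 < \<Lambda> \<omega>" using Lam_pos by auto
      then show "(\<lambda>K. w K \<omega>) \<longlonglongrightarrow> L (\<Lambda> \<omega>)"
        unfolding w_def L_def by (rule summable_LIMSEQ[OF PL(1)])
    qed
    show "AE \<omega> in M. norm (w K \<omega>) \<le> B" for K
      by (rule AE_I2) (simp add: wB)
  qed
  have EfS: "(\<integral>\<omega>. f (S \<omega>) \<partial>M) = (\<integral>\<omega>. L (\<Lambda> \<omega>) \<partial>M)"
  proof -
    have "(\<lambda>K. integral\<^sup>L M (u K)) \<longlonglongrightarrow> (\<integral>\<omega>. L (\<Lambda> \<omega>) \<partial>M)"
      using lim_w by (simp only: int_u)
    with lim_u show ?thesis by (rule LIMSEQ_unique)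
  qed
  have LB: "\<bar>L (\<Lambda> \<omega>)\<bar> \<le> B" if "\<omega> \<in> space M" for \<omega>
  proof -
    have "(\<lambda>K. w K \<omega>) \<longlonglongrightarrow> L (\<Lambda> \<omega>)"
      using that Lam_pos unfolding w_def L_def by (intro summable_LIMSEQ PL(1)) auto
    then have "(\<lambda>K. \<bar>w K \<omega>\<bar>) \<longlonglongrightarrow> \<bar>L (\<Lambda> \<omega>)\<bar>" by (rule tendsto_rabs)
    then show ?thesis using wB[OF that] by (intro LIMSEQ_le_const2) auto
  qed
  have hi: "integrable M (\<lambda>\<omega>. L (\<Lambda> \<omega>) - f (\<Lambda> \<omega>))"
  proof (rule integrable_const_bound[where B="B + B"])
    show "AE \<omega> in M. norm (L (\<Lambda> \<omega>) - f (\<Lambda> \<omega>)) \<le> B + B"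
    proof (rule AE_I2)
      fix \<omega> assume "\<omega> \<in> space M"
      then have "\<bar>L (\<Lambda> \<omega>)\<bar> \<le> B" by (rule LB)
      moreover have "\<bar>f (\<Lambda> \<omega>)\<bar> \<le> B" by (rule fB)
      ultimately show "norm (L (\<Lambda> \<omega>) - f (\<Lambda> \<omega>)) \<le> B + B" by simp
    qed
    show "(\<lambda>\<omega>. L (\<Lambda> \<omega>) - f (\<Lambda> \<omega>)) \<in> borel_measurable M" using Lm by measurable
  qed
  have fLi: "integrable M (\<lambda>\<omega>. f (\<Lambda> \<omega>))"
    by (rule integrable_const_bound[where B=B]) (use fB in auto)
  have "(\<integral>\<omega>. f ((\<Sum>j<N (m * \<Lambda> \<omega>) \<omega>. X j \<omega>) / (a * m)) \<partial>M) - (\<integral>\<omega>. f (\<Lambda> \<omega>) \<partial>M)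
      = (\<integral>\<omega>. L (\<Lambda> \<omega>) - f (\<Lambda> \<omega>) \<partial>M)"
  proof -
    have "(\<integral>\<omega>. f ((\<Sum>j<N (m * \<Lambda> \<omega>) \<omega>. X j \<omega>) / (a * m)) \<partial>M) = (\<integral>\<omega>. f (S \<omega>) \<partial>M)"
      by (simp add: S_def T_def Nn_def)
    also have "\<dots> = (\<integral>\<omega>. L (\<Lambda> \<omega>) \<partial>M)" by (rule EfS)
    moreover have Li: "integrable M (\<lambda>\<omega>. L (\<Lambda> \<omega>))"
      by (rule integrable_const_bound[where B=B]) (use LB Lm in \<open>auto intro: AE_I2\<close>)
    ultimately show ?thesis using Bochner_Integration.integral_diff[OF Li fLi] by simp
  qed
  then have "ennreal \<bar>(\<integral>\<omega>. f ((\<Sum>j<N (m * \<Lambda> \<omega>) \<omega>. X j \<omega>) / (a * m)) \<partial>M) - (\<integral>\<omega>. f (\<Lambda> \<omega>) \<partial>M)\<bar>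
      \<le> (\<integral>\<^sup>+\<omega>. ennreal (norm (L (\<Lambda> \<omega>) - f (\<Lambda> \<omega>))) \<partial>M)"
    using integral_norm_bound_ennreal[OF hi] by simp
  also have "\<dots> \<le> (\<integral>\<^sup>+\<omega>. ennreal (G * (\<Lambda> \<omega> * (1 + \<sigma>2 / a\<^sup>2) / m) powr (s / 2)) \<partial>M)"
  proof (rule nn_integral_mono)
    fix \<omega> assume "\<omega> \<in> space M"
    then have "0 < \<Lambda> \<omega>" using Lam_pos by auto
    then show "ennreal (norm (L (\<Lambda> \<omega>) - f (\<Lambda> \<omega>))) \<le> ennreal (G * (\<Lambda> \<omega> * (1 + \<sigma>2 / a\<^sup>2) / m) powr (s / 2))"
      using PL(2) by (intro ennreal_leI) (simp add: v_def)
  qed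
  finally show ?thesis .
qed


theorem corollary2:
  fixes M :: "'a measure"
    and \<Lambda> :: "'a \<Rightarrow> real"
    and N :: "real \<Rightarrow> 'a \<Rightarrow> nat"
    and mm :: "nat \<Rightarrow> real"
    and X :: "nat \<Rightarrow> 'a \<Rightarrow> real"
    and s :: real and n :: nat
  assumes P: "prob_space M"
    and Lam_rv: "\<Lambda> \<in> borel_measurable M"
    and Lam_pos: "\<forall>\<omega>\<in>space M. \<Lambda> \<omega> > 0"
    and N_pp: "std_poisson_process M N"
    and N_indep_Lam: "indep_rv M
          (Pi\<^sub>M UNIV (\<lambda>_. count_space UNIV)) (\<lambda>\<omega> t. N t \<omega>) borel \<Lambda>"
    and mm_pos: "\<forall>k. mm k > 0"
    and mm_lim: "filterlim mm at_top sequentially"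
    and X_rv: "\<forall>i. X i \<in> borel_measurable M"
    and X_indep: "prob_space.indep_vars M (\<lambda>_. borel) X UNIV"
    and X_ident: "\<forall>i. distr M borel (X i) = distr M borel (X 0)"
    and X_sq: "integrable M (\<lambda>\<omega>. (X 0 \<omega>)\<^sup>2)"
    and a_ne: "(\<integral>\<omega>. X 0 \<omega> \<partial>M) \<noteq> 0"
    and NX_indep: "\<forall>k. indep_rv M
          (count_space UNIV) (\<lambda>\<omega>. N (mm k * \<Lambda> \<omega>) \<omega>)
          (Pi\<^sub>M UNIV (\<lambda>_. borel)) (\<lambda>\<omega> i. X i \<omega>)"
    and s_ge: "1 \<le> s" and s_le: "s \<le> 2"
  shows
   "(let a = (\<integral>\<omega>. X 0 \<omega> \<partial>M);
         \<sigma>2 = prob_space.variance M (X 0);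
         S = (\<lambda>\<omega>. (\<Sum>j<N (mm n * \<Lambda> \<omega>) \<omega>. X j \<omega>) / (a * mm n))
     in zolotarev M s S \<Lambda>
          \<le> (\<integral>\<^sup>+\<omega>. ennreal (\<Lambda> \<omega> powr (s / 2)) \<partial>M)
            * ennreal (1 / mm n powr (s / 2)
                       * (Gamma (1 + zol_alpha s) / Gamma (1 + s))
                       * (1 + \<sigma>2 / a\<^sup>2) powr (s / 2))
      \<and> zolotarev M 2 S \<Lambda>
          \<le> (\<integral>\<^sup>+\<omega>. ennreal (\<Lambda> \<omega>) \<partial>M)
            * ennreal ((1 + \<sigma>2 / a\<^sup>2) / (2 * mm n)))"
proof -
  interpret prob_space M by (rule P)
  define a where "a = (\<integral>\<omega>. X 0 \<omega> \<partial>M)"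
  define \<sigma>2 where "\<sigma>2 = prob_space.variance M (X 0)"
  define m where "m = mm n"
  define S where "S = (\<lambda>\<omega>. (\<Sum>j<N (mm n * \<Lambda> \<omega>) \<omega>. X j \<omega>) / (a * mm n))"
  define c where "c = 1 + \<sigma>2 / a\<^sup>2"
  have m0: "0 < m" using mm_pos by (simp add: m_def)
  have \<sigma>0: "0 \<le> \<sigma>2" unfolding \<sigma>2_def by simp
  have c0: "0 < c" unfolding c_def using \<sigma>0 by (simp add: add_pos_nonneg)
  have \<Lambda>m[measurable]: "\<Lambda> \<in> borel_measurable M" by (rule Lam_rv)
  have main: "zolotarev M t S \<Lambda>
      \<le> (\<integral>\<^sup>+\<omega>. ennreal (\<Lambda> \<omega> powr (t / 2)) \<partial>M)
         * ennreal (1 / m powr (t / 2) * (Gamma (1 + zol_alpha t) / Gamma (1 + t)) * c powr (t / 2))"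
    if t: "1 \<le> t" "t \<le> 2" for t
  proof -
    define G where "G = Gamma (1 + zol_alpha t) / Gamma (1 + t)"
    have G0: "0 \<le> G" unfolding G_def
      using t ceiling_correct[of t] by (intro divide_nonneg_nonneg less_imp_le[OF Gamma_real_pos]) (auto simp: zol_alpha_def zol_m_def)
    have K0: "0 \<le> 1 / m powr (t / 2) * G * c powr (t / 2)" using G0 m0 c0 by simp
    have eq: "(\<integral>\<^sup>+\<omega>. ennreal (G * (\<Lambda> \<omega> * c / m) powr (t / 2)) \<partial>M)
        = (\<integral>\<^sup>+\<omega>. ennreal (\<Lambda> \<omega> powr (t / 2)) \<partial>M) * ennreal (1 / m powr (t / 2) * G * c powr (t / 2))"
    proof -
      have "(\<integral>\<^sup>+\<omega>. ennreal (G * (\<Lambda> \<omega> * c / m) powr (t / 2)) \<partial>M)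
          = (\<integral>\<^sup>+\<omega>. ennreal (\<Lambda> \<omega> powr (t / 2)) * ennreal (1 / m powr (t / 2) * G * c powr (t / 2)) \<partial>M)"
      proof (rule nn_integral_cong)
        fix \<omega> assume "\<omega> \<in> space M"
        have e: "G * (\<Lambda> \<omega> * c / m) powr (t / 2) = \<Lambda> \<omega> powr (t / 2) * (1 / m powr (t / 2) * G * c powr (t / 2))"
          by (simp add: powr_mult powr_divide)
        show "ennreal (G * (\<Lambda> \<omega> * c / m) powr (t / 2)) = ennreal (\<Lambda> \<omega> powr (t / 2)) * ennreal (1 / m powr (t / 2) * G * c powr (t / 2))"
          unfolding e by (rule ennreal_mult''[OF K0])
      qed
      also have "\<dots> = (\<integral>\<^sup>+\<omega>. ennreal (\<Lambda> \<omega> powr (t / 2)) \<partial>M) * ennreal (1 / m powr (t / 2) * G * c powr (t / 2))"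
        by (rule nn_integral_multc) measurable
      finally show ?thesis .
    qed
    have "zolotarev M t S \<Lambda> \<le> (\<integral>\<^sup>+\<omega>. ennreal (G * (\<Lambda> \<omega> * c / m) powr (t / 2)) \<partial>M)"
      unfolding zolotarev_def
    proof (rule SUP_least)
      fix f assume f: "f \<in> zol_class t"
      have NX: "indep_rv M (count_space UNIV) (\<lambda>\<omega>. N (m * \<Lambda> \<omega>) \<omega>) (Pi\<^sub>M UNIV (\<lambda>_. borel)) (\<lambda>\<omega> i. X i \<omega>)"
        using NX_indep unfolding m_def by blast
      show "ennreal \<bar>(\<integral>\<omega>. f (S \<omega>) \<partial>M) - (\<integral>\<omega>. f (\<Lambda> \<omega>) \<partial>M)\<bar>
          \<le> (\<integral>\<^sup>+\<omega>. ennreal (G * (\<Lambda> \<omega> * c / m) powr (t / 2)) \<partial>M)"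
        using core[OF P Lam_rv Lam_pos N_pp N_indep_Lam m0 X_rv X_indep X_ident X_sq a_ne NX t f]
        unfolding S_def G_def c_def a_def \<sigma>2_def m_def by simp
    qed
    then have "zolotarev M t S \<Lambda> \<le> (\<integral>\<^sup>+\<omega>. ennreal (\<Lambda> \<omega> powr (t / 2)) \<partial>M) * ennreal (1 / m powr (t / 2) * G * c powr (t / 2))"
      by (simp only: eq)
    then show ?thesis by (simp only: G_def)
  qed
  have z2: "zol_alpha 2 = 1" by (simp add: zol_alpha_def zol_m_def)
  have g2: "Gamma (1 + zol_alpha 2) / Gamma (1 + 2) = (1 / 2 :: real)"
    by (simp add: z2 Gamma_numeral)
  have r2: "(\<integral>\<^sup>+\<omega>. ennreal (\<Lambda> \<omega> powr (2 / 2)) \<partial>M) * ennreal (1 / m powr (2 / 2) * (Gamma (1 + zol_alpha 2) / Gamma (1 + 2)) * c powr (2 / 2))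
      = (\<integral>\<^sup>+\<omega>. ennreal (\<Lambda> \<omega>) \<partial>M) * ennreal (c / (2 * m))"
  proof -
    have "(\<integral>\<^sup>+\<omega>. ennreal (\<Lambda> \<omega> powr (2 / 2)) \<partial>M) = (\<integral>\<^sup>+\<omega>. ennreal (\<Lambda> \<omega>) \<partial>M)"
      by (rule nn_integral_cong) (use Lam_pos in \<open>simp add: powr_one less_imp_le\<close>)
    moreover have "1 / m powr (2 / 2) * (Gamma (1 + zol_alpha 2) / Gamma (1 + 2)) * c powr (2 / 2) = c / (2 * m)"
      using m0 c0 by (simp only: g2) (simp add: powr_one less_imp_le)
    ultimately show ?thesis by simp
  qed
  show ?thesis
    unfolding Let_def
    using main[OF s_ge s_le] main[of 2] r2
    by (simp add: S_def a_def \<sigma>2_def m_def c_def)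
qed


end
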